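(* Let $\langle X\mid R\rangle$ be an extra-confluent $N$-homogeneous presentation. Let $m,r,k$ be integers with $m\geq N+2$, $r\geq0$, $2\leq k\leq N-1$ and $r+k\leq m-N$. Then: (1) $S^{(m)}_r\vee S^{(m)}_{r+k}=S^{(m)}_r\vee S^{(m)}_{r+1}\vee\cdots\vee S^{(m)}_{r+k}$; (2) $\left(S^{(m)}_r\wedge\cdots\wedge S^{(m)}_{r+k-1}\right)\vee S^{(m)}_{r+k}=S^{(m)}_{r+k-1}\vee S^{(m)}_{r+k}$.
   Context: $\mathbb{K}$ is a field, $N\geq2$, $X^{(m)}$ words of length $m$, $V=\mathbb{K}X$, $V^{\otimes m}=\mathbb{K}X^{(m)}$. $R\subset V^{\otimes N}$, $\overline R=\mathrm{span}(R)$. $X$ is totally ordered, $X^{(m)}$ lexicographically ordered, $\mathrm{lm}(f)$ greatest word in $f\neq0$. Conventions: leading coefficients in $R$ are $1$; a word is a normal form if it has no factor $\mathrm{lm}(f)$, $f\in R$; the presentation is reduced ($\mathrm{lm}(f)-f$ is a combination of normal-form words; $\mathrm{lm}(f)$ has no factor $\mathrm{lm}(g)$, $g\in R\setminus\{f\}$). $S\in\mathrm{End}(V^{\otimes N})$: $S(\mathrm{lm}(f))=\mathrm{lm}(f)-f$ ($f\in R$), $S(w)=w$ otherwise. $\langle t,s\rangle^k=\cdots sts$ ($k$ factors). Side-confluent: for each $1\leq m\leq N-1$ some $k$ gives $\langle\mathrm{id}_{V^{\otimes m}}\otimes S,S\otimes\mathrm{id}_{V^{\otimes m}}\rangle^k=\langle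 S\otimes\mathrm{id}_{V^{\otimes m}},\mathrm{id}_{V^{\otimes m}}\otimes S\rangle^k$. Extra-confluent: side-confluent, $X$ finite, and $(V^{\otimes n}\otimes\overline R)\cap(\overline R\otimes V^{\otimes n})\subset V^{\otimes n-1}\otimes\overline R\otimes V$ for $2\leq n\leq N-1$. $S_i^{(m)}=\mathrm{id}_{V^{\otimes i}}\otimes S\otimes\mathrm{id}_{V^{\otimes m-N-i}}$ for $0\leq i\leq m-N$. A reduction operator relatively to $X^{(m)}$ is a linear projector $T$ of $V^{\otimes m}$ with each $T(w)$ equal to $w$ or a combination of words $<w$; the unique one with kernel $W$ is $\theta_{X^{(m)}}^{-1}(W)$; $T_1\wedge T_2=\theta^{-1}(\ker T_1+\ker T_2)$, $T_1\vee T_2=\theta^{-1}(\ker T_1\cap\ker T_2)$ (associative). *)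

theory Defs
  imports Main
begin

text \<open>Words over a finite totally ordered alphabet 'x are lists; a vector of
  V^(tensor m) = K X^(m) is a coefficient function on words supported on words of length m.
  A linear endomorphism of V^(tensor m) is given by its matrix T w u
  (= coefficient of the word u in T(w)), vanishing unless both words have length m.\<close>

definition Vm :: "nat \<Rightarrow> ('x list \<Rightarrow> 'k::field) set" where
  "Vm m = {v. \<forall>u. v u \<noteq> 0 \<longrightarrow> length u = m}"

definition delta :: "'x list \<Rightarrow> 'x list \<Rightarrow> 'k::field" where
  "delta w = (\<lambda>u. if u = w then 1 else 0)"

definition lin_span :: "('x list \<Rightarrow> 'k::field) set \<Rightarrow> ('x list \<Rightarrow> 'k) set" where
  "lin_span A = {v. \<exists>F c. finite F \<and> F \<subseteq> A \<and> v = (\<lambda>u. \<Sum>f\<in>F. c f * f u)}"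

definition lexless :: "'x::linorder list \<Rightarrow> 'x list \<Rightarrow> bool" where
  "lexless u w \<longleftrightarrow> (\<exists>p a b s t. u = p @ a # s \<and> w = p @ b # t \<and> a < b)"

definition lm :: "('x::linorder list \<Rightarrow> 'k::field) \<Rightarrow> 'x list" where
  "lm f = (THE w. f w \<noteq> 0 \<and> (\<forall>u. f u \<noteq> 0 \<longrightarrow> u = w \<or> lexless u w))"

definition is_factor :: "'x list \<Rightarrow> 'x list \<Rightarrow> bool" where
  "is_factor v w \<longleftrightarrow> (\<exists>p s. w = p @ v @ s)"

definition normal_form :: "('x::linorder list \<Rightarrow> 'k::field) set \<Rightarrow> 'x list \<Rightarrow> bool" where
  "normal_form R u \<longleftrightarrow> (\<forall>f\<in>R. \<not> is_factor (lm f) u)"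

definition reduced_hom_pres :: "nat \<Rightarrow> ('x::linorder list \<Rightarrow> 'k::field) set \<Rightarrow> bool" where
  "reduced_hom_pres N R \<longleftrightarrow> R \<subseteq> Vm N \<and>
     (\<forall>f\<in>R. f \<noteq> (\<lambda>_. 0) \<and> f (lm f) = 1 \<and>
        (\<forall>u. u \<noteq> lm f \<and> f u \<noteq> 0 \<longrightarrow> normal_form R u) \<and>
        (\<forall>g\<in>R. g \<noteq> f \<longrightarrow> \<not> is_factor (lm g) (lm f)))"

definition S_op :: "nat \<Rightarrow> ('x::linorder list \<Rightarrow> 'k::field) set \<Rightarrow> 'x list \<Rightarrow> 'x list \<Rightarrow> 'k" where
  "S_op N R w u = (if length w = N \<and> length u = N then
      (if \<exists>f\<in>R. lm f = w then delta w u - (SOME f. f \<in> R \<and> lm f = w) u else delta w u)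
    else 0)"

definition idop :: "nat \<Rightarrow> 'x list \<Rightarrow> 'x list \<Rightarrow> 'k::field" where
  "idop m w u = (if length w = m \<and> u = w then 1 else 0)"

text \<open>composition A \<circ> B of endomorphisms of V^(tensor m)\<close>
definition comp :: "nat \<Rightarrow> ('x list \<Rightarrow> 'x list \<Rightarrow> 'k::field) \<Rightarrow> ('x list \<Rightarrow> 'x list \<Rightarrow> 'k)
    \<Rightarrow> 'x list \<Rightarrow> 'x list \<Rightarrow> 'k" where
  "comp m A B w u = (\<Sum>y\<in>{y. length y = m}. B w y * A y u)"

definition apply_op :: "nat \<Rightarrow> ('x list \<Rightarrow> 'x list \<Rightarrow> 'k::field) \<Rightarrow> ('x list \<Rightarrow> 'k) \<Rightarrow> 'x list \<Rightarrow> 'k" where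
  "apply_op m T v = (\<lambda>u. \<Sum>w\<in>{w. length w = m}. v w * T w u)"

text \<open>id_{V^(tensor a)} \<otimes> T \<otimes> id_{V^(tensor b)}, for T an endomorphism of V^(tensor n)\<close>
definition embed :: "nat \<Rightarrow> nat \<Rightarrow> nat \<Rightarrow> ('x list \<Rightarrow> 'x list \<Rightarrow> 'k::field)
    \<Rightarrow> 'x list \<Rightarrow> 'x list \<Rightarrow> 'k" where
  "embed a n b T w u = (if length w = a + n + b \<and> length u = a + n + b \<and>
      take a u = take a w \<and> drop (a + n) u = drop (a + n) w
    then T (take n (drop a w)) (take n (drop a u)) else 0)"

text \<open>\<langle>t,s\<rangle>^k = ... s t s (k factors)\<close>
fun braid :: "nat \<Rightarrow> ('x list \<Rightarrow> 'x list \<Rightarrow> 'k::field) \<Rightarrow> ('x list \<Rightarrow> 'x list \<Rightarrow> 'k)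
    \<Rightarrow> nat \<Rightarrow> 'x list \<Rightarrow> 'x list \<Rightarrow> 'k" where
  "braid n t s 0 = idop n"
| "braid n t s (Suc k) = comp n (braid n s t k) s"

definition side_confluent :: "nat \<Rightarrow> ('x::linorder list \<Rightarrow> 'k::field) set \<Rightarrow> bool" where
  "side_confluent N R \<longleftrightarrow> (\<forall>j. 1 \<le> j \<and> j \<le> N - 1 \<longrightarrow>
     (\<exists>k\<ge>1. braid (N + j) (embed j N 0 (S_op N R)) (embed 0 N j (S_op N R)) k
          = braid (N + j) (embed 0 N j (S_op N R)) (embed j N 0 (S_op N R)) k))"

text \<open>p \<otimes> w \<otimes> s for words p, s and a vector w\<close>
definition tens :: "'x list \<Rightarrow> ('x list \<Rightarrow> 'k::field) \<Rightarrow> 'x list \<Rightarrow> 'x list \<Rightarrow> 'k" where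
  "tens p w s = (\<lambda>u. if length p + length s \<le> length u \<and> take (length p) u = p
       \<and> drop (length u - length s) u = s
     then w (drop (length p) (take (length u - length s) u)) else 0)"

text \<open>V^(tensor a) \<otimes> W \<otimes> V^(tensor b)\<close>
definition tens_sub :: "nat \<Rightarrow> ('x list \<Rightarrow> 'k::field) set \<Rightarrow> nat \<Rightarrow> ('x list \<Rightarrow> 'k) set" where
  "tens_sub a W b = lin_span {tens p w s | p w s. length p = a \<and> w \<in> W \<and> length s = b}"

definition extra_confluent :: "nat \<Rightarrow> ('x::{linorder,finite} list \<Rightarrow> 'k::field) set \<Rightarrow> bool" where
  "extra_confluent N R \<longleftrightarrow> side_confluent N R \<and>
     (\<forall>n. 2 \<le> n \<and> n \<le> N - 1 \<longrightarrow>
        tens_sub n (lin_span R) 0 \<inter> tens_sub 0 (lin_span R) n \<subseteq> tens_sub (n - 1) (lin_span R) 1)"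

definition Sm :: "nat \<Rightarrow> ('x::linorder list \<Rightarrow> 'k::field) set \<Rightarrow> nat \<Rightarrow> nat \<Rightarrow> 'x list \<Rightarrow> 'x list \<Rightarrow> 'k" where
  "Sm N R m i = embed i N (m - N - i) (S_op N R)"

definition red_op :: "nat \<Rightarrow> ('x::linorder list \<Rightarrow> 'x list \<Rightarrow> 'k::field) \<Rightarrow> bool" where
  "red_op m T \<longleftrightarrow> (\<forall>w u. T w u \<noteq> 0 \<longrightarrow> length w = m \<and> length u = m) \<and>
     comp m T T = T \<and>
     (\<forall>w. length w = m \<longrightarrow> T w = delta w \<or> (\<forall>u. T w u \<noteq> 0 \<longrightarrow> lexless u w))"

definition ker_op :: "nat \<Rightarrow> ('x list \<Rightarrow> 'x list \<Rightarrow> 'k::field) \<Rightarrow> ('x list \<Rightarrow> 'k) set" where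
  "ker_op m T = {v \<in> Vm m. apply_op m T v = (\<lambda>_. 0)}"

definition theta_inv :: "nat \<Rightarrow> ('x::linorder list \<Rightarrow> 'k::field) set \<Rightarrow> 'x list \<Rightarrow> 'x list \<Rightarrow> 'k" where
  "theta_inv m W = (THE T. red_op m T \<and> ker_op m T = W)"

definition wedge :: "nat \<Rightarrow> ('x::linorder list \<Rightarrow> 'x list \<Rightarrow> 'k::field) \<Rightarrow> ('x list \<Rightarrow> 'x list \<Rightarrow> 'k)
    \<Rightarrow> 'x list \<Rightarrow> 'x list \<Rightarrow> 'k" where
  "wedge m T1 T2 = theta_inv m {(\<lambda>u. v1 u + v2 u) | v1 v2. v1 \<in> ker_op m T1 \<and> v2 \<in> ker_op m T2}"

definition vee :: "nat \<Rightarrow> ('x::linorder list \<Rightarrow> 'x list \<Rightarrow> 'k::field) \<Rightarrow> ('x list \<Rightarrow> 'x list \<Rightarrow> 'k)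
    \<Rightarrow> 'x list \<Rightarrow> 'x list \<Rightarrow> 'k" where
  "vee m T1 T2 = theta_inv m (ker_op m T1 \<inter> ker_op m T2)"

text \<open>iterated operations T1 op T2 op ... op Tn (the operations are associative)\<close>
fun vee_list :: "nat \<Rightarrow> ('x::linorder list \<Rightarrow> 'x list \<Rightarrow> 'k::field) list \<Rightarrow> 'x list \<Rightarrow> 'x list \<Rightarrow> 'k" where
  "vee_list m [] = undefined"
| "vee_list m (T # Ts) = foldl (vee m) T Ts"

fun wedge_list :: "nat \<Rightarrow> ('x::linorder list \<Rightarrow> 'x list \<Rightarrow> 'k::field) list \<Rightarrow> 'x list \<Rightarrow> 'x list \<Rightarrow> 'k" where
  "wedge_list m [] = undefined"
| "wedge_list m (T # Ts) = foldl (wedge m) T Ts"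

end

theory Submission
  imports Defs "HOL-Library.List_Lexorder"
begin


lemma lexless_iff:
  fixes u w :: "'x::linorder list"
  assumes "length u = length w"
  shows "lexless u w \<longleftrightarrow> u < w"
proof
  assume "lexless u w" then show "u < w"
    unfolding lexless_def list_less_def lexord_def by blast
next
  assume "u < w"
  then have "(u, w) \<in> lexord {(a, b). a < b}" by (simp add: list_less_def)
  then show "lexless u w" using assms unfolding lexless_def lexord_def by auto
qed

lemma finite_words: "finite {w::'x::finite list. length w = m}"
  using finite_lists_length_eq[of "UNIV::'x set" m] by simp

lemma word_induct_aux:
  fixes P :: "'x::{finite,linorder} list \<Rightarrow> bool"
  assumes step: "\<And>w. length w = m \<Longrightarrow> (\<And>u. length u = m \<Longrightarrow> u < w \<Longrightarrow> P u) \<Longrightarrow> P w"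
  shows "\<forall>w. length w = m \<longrightarrow> card {u. length u = m \<and> u < w} = n \<longrightarrow> P w"
proof (induction n rule: less_induct)
  case (less n)
  show ?case
  proof (intro allI impI)
    fix w :: "'x list" assume lw: "length w = m" and cw: "card {u. length u = m \<and> u < w} = n"
    show "P w"
    proof (rule step[OF lw])
      fix u :: "'x list" assume lu: "length u = m" and uw: "u < w"
      have sub: "{v. length v = m \<and> v < u} \<subset> {v. length v = m \<and> v < w}"
        using lu uw by auto
      have "finite {v::'x list. length v = m \<and> v < w}"
        by (rule finite_subset[OF _ finite_words[of m]]) auto
      then have "card {v. length v = m \<and> v < u} < n"
        using psubset_card_mono[OF _ sub] cw by simp
      then show "P u" using less.IH lu by blast
    qed
  qed
qed

lemma word_induct:
  fixes P :: "'x::{finite,linorder} list \<Rightarrow> bool"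
  assumes "length w = m"
    and "\<And>w. length w = m \<Longrightarrow> (\<And>u. length u = m \<Longrightarrow> u < w \<Longrightarrow> P u) \<Longrightarrow> P w"
  shows "P w"
  using word_induct_aux[of m P, OF assms(2)] assms(1) by blast

definition Bl :: "nat \<Rightarrow> 'x::linorder list \<Rightarrow> ('x list \<Rightarrow> 'k::field) \<Rightarrow> bool" where
  "Bl m w v \<longleftrightarrow> v \<in> Vm m \<and> (\<forall>u. v u \<noteq> 0 \<longrightarrow> u \<le> w)"

definition Bs :: "nat \<Rightarrow> 'x::linorder list \<Rightarrow> ('x list \<Rightarrow> 'k::field) \<Rightarrow> bool" where
  "Bs m w v \<longleftrightarrow> v \<in> Vm m \<and> (\<forall>u. v u \<noteq> 0 \<longrightarrow> u < w)"

definition subsp :: "nat \<Rightarrow> ('x list \<Rightarrow> 'k::field) set \<Rightarrow> bool" where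
  "subsp m W \<longleftrightarrow> W \<subseteq> Vm m \<and> (\<lambda>_. 0) \<in> W \<and> (\<forall>a\<in>W. \<forall>b\<in>W. (\<lambda>u. a u + b u) \<in> W)
     \<and> (\<forall>c. \<forall>a\<in>W. (\<lambda>u. c * a u) \<in> W)"

definition opsupp :: "nat \<Rightarrow> ('x list \<Rightarrow> 'x list \<Rightarrow> 'k::field) \<Rightarrow> bool" where
  "opsupp m T \<longleftrightarrow> (\<forall>w u. T w u \<noteq> 0 \<longrightarrow> length w = m \<and> length u = m)"

lemma subsp_zero: "subsp m W \<Longrightarrow> (\<lambda>_. 0) \<in> W" by (simp add: subsp_def)
lemma subsp_add: "subsp m W \<Longrightarrow> a \<in> W \<Longrightarrow> b \<in> W \<Longrightarrow> (\<lambda>u. a u + b u) \<in> W" by (simp add: subsp_def)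
lemma subsp_smult: "subsp m W \<Longrightarrow> a \<in> W \<Longrightarrow> (\<lambda>u. c * a u) \<in> W" by (simp add: subsp_def)
lemma subsp_Vm: "subsp m W \<Longrightarrow> a \<in> W \<Longrightarrow> a \<in> Vm m" by (auto simp add: subsp_def)

lemma subsp_diff: assumes "subsp m W" "a \<in> W" "b \<in> W" shows "(\<lambda>u. a u - b u) \<in> W"
proof -
  have "(\<lambda>u. (-1) * b u) \<in> W" using subsp_smult[OF assms(1,3)] .
  from subsp_add[OF assms(1,2) this] show ?thesis by simp
qed

lemma subsp_lincomb:
  assumes "subsp m W" "finite F" "\<And>y. y \<in> F \<Longrightarrow> f y \<in> W"
  shows "(\<lambda>u. \<Sum>y\<in>F. c y * f y u) \<in> W"
  using assms(2,3)
proof (induction F rule: finite_induct)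
  case empty then show ?case using subsp_zero[OF assms(1)] by simp
next
  case (insert y F)
  have "(\<lambda>u. c y * f y u) \<in> W" using insert subsp_smult[OF assms(1)] by blast
  from subsp_add[OF assms(1) this insert.IH] insert show ?case by simp
qed

lemma subsp_sum:
  fixes W :: "('x list \<Rightarrow> 'k::field) set"
  assumes "subsp m W" "finite F" "\<And>y. y \<in> F \<Longrightarrow> f y \<in> W"
  shows "(\<lambda>u. \<Sum>y\<in>F. f y u) \<in> W"
  using subsp_lincomb[OF assms, where c = "\<lambda>_. 1"] by simp

lemma Vm_subsp: "subsp m (Vm m)"
  unfolding subsp_def Vm_def
  by (auto; metis add.left_neutral)

lemma Vm_D: "v \<in> Vm m \<Longrightarrow> v u \<noteq> 0 \<Longrightarrow> length u = m" by (auto simp: Vm_def)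

lemma delta_Vm: "length w = m \<Longrightarrow> delta w \<in> Vm m" by (auto simp: Vm_def delta_def)

lemma vec_expand:
  fixes v :: "'x::finite list \<Rightarrow> 'k::field"
  assumes "v \<in> Vm m"
  shows "v = (\<lambda>u. \<Sum>w\<in>{w. length w = m}. v w * delta w u)"
proof
  fix u
  have "(\<Sum>w\<in>{w. length w = m}. v w * delta w u) = (\<Sum>w\<in>{w. length w = m}. if w = u then v u else 0)"
    by (rule sum.cong) (auto simp: delta_def)
  also have "\<dots> = v u"
  proof (cases "length u = m")
    case True then show ?thesis by (simp add: sum.delta[OF finite_words])
  next
    case False then show ?thesis using assms by (auto simp: Vm_def sum.delta[OF finite_words])
  qed
  finally show "v u = (\<Sum>w\<in>{w. length w = m}. v w * delta w u)" by simp
qed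

lemma apply_op_delta:
  fixes w :: "'x::finite list"
  assumes "length w = m"
  shows "apply_op m T (delta w) = T w"
proof
  fix u
  have "apply_op m T (delta w) u = (\<Sum>y\<in>{y. length y = m}. if y = w then T w u else 0)"
    unfolding apply_op_def by (rule sum.cong) (auto simp: delta_def)
  also have "\<dots> = T w u" using assms by (simp add: sum.delta[OF finite_words])
  finally show "apply_op m T (delta w) u = T w u" .
qed

lemma apply_op_Vm: "opsupp m T \<Longrightarrow> apply_op m T v \<in> Vm m"
  unfolding Vm_def apply_op_def opsupp_def
proof (intro CollectI allI impI)
  fix u assume A: "\<forall>w u. T w u \<noteq> 0 \<longrightarrow> length w = m \<and> length u = m"
    and B: "(\<Sum>w\<in>{w. length w = m}. v w * T w u) \<noteq> 0"
  show "length u = m"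
  proof (rule ccontr)
    assume "length u \<noteq> m"
    then have "\<forall>w. T w u = 0" using A by blast
    then show False using B by simp
  qed
qed

lemma apply_op_lincomb:
  assumes "finite F"
  shows "apply_op m T (\<lambda>u. \<Sum>y\<in>F. c y * f y u) = (\<lambda>u. \<Sum>y\<in>F. c y * apply_op m T (f y) u)"
  unfolding apply_op_def
  by (auto simp: sum_distrib_left sum_distrib_right mult.assoc intro!: ext sum.swap)

lemma apply_op_add:
  "apply_op m T (\<lambda>u. a u + b u) = (\<lambda>u. apply_op m T a u + apply_op m T b u)"
  unfolding apply_op_def by (auto simp: distrib_right sum.distrib intro!: ext)

lemma apply_op_diff:
  "apply_op m T (\<lambda>u. a u - b u) = (\<lambda>u. apply_op m T a u - apply_op m T b u)"
  unfolding apply_op_def by (auto simp: left_diff_distrib sum_subtractf intro!: ext)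

lemma apply_op_smult:
  "apply_op m T (\<lambda>u. c * a u) = (\<lambda>u. c * apply_op m T a u)"
  unfolding apply_op_def by (auto simp: sum_distrib_left mult.assoc intro!: ext)

lemma apply_op_zero: "apply_op m T (\<lambda>_. 0) = (\<lambda>_. 0)"
  unfolding apply_op_def by simp

lemma apply_op_comp:
  "apply_op m (comp m A B) v = apply_op m A (apply_op m B v)"
  unfolding apply_op_def comp_def
  by (auto simp: sum_distrib_left sum_distrib_right mult.assoc intro!: ext sum.swap)

lemma ker_subsp: "subsp m (ker_op m T)"
  unfolding subsp_def ker_op_def
  using Vm_subsp[of m]
  by (auto simp: apply_op_add apply_op_smult apply_op_zero subsp_def)

lemma comp_row:
  assumes "length w = m"
  shows "comp m A B w = apply_op m A (B w)"
  unfolding comp_def apply_op_def by simp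




lemma red_op_supp: "red_op m T \<Longrightarrow> opsupp m T"
  by (simp add: red_op_def opsupp_def)

lemma red_op_idem: "red_op m T \<Longrightarrow> comp m T T = T"
  by (simp add: red_op_def)

lemma red_op_row:
  fixes T :: "'x::linorder list \<Rightarrow> 'x list \<Rightarrow> 'k::field"
  assumes "red_op m T" "length w = m"
  shows "T w = delta w \<or> (\<forall>u. T w u \<noteq> 0 \<longrightarrow> u < w)"
proof -
  have "T w = delta w \<or> (\<forall>u. T w u \<noteq> 0 \<longrightarrow> lexless u w)" using assms by (simp add: red_op_def)
  moreover have "\<And>u. T w u \<noteq> 0 \<Longrightarrow> length u = m" using assms by (simp add: red_op_def)
  ultimately show ?thesis using lexless_iff assms(2) by metis
qed

lemma delta_self[simp]: "delta w w = 1" by (simp add: delta_def)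
lemma delta_other: "u \<noteq> w \<Longrightarrow> delta w u = 0" by (simp add: delta_def)

lemma apply_fixed:
  fixes T :: "'x::{finite,linorder} list \<Rightarrow> 'x list \<Rightarrow> 'k::field"
  assumes "red_op m T" "length w = m" "T w = delta w" "Bl m w x"
  shows "apply_op m T x w = x w"
proof -
  have "apply_op m T x w = (\<Sum>y\<in>{y. length y = m}. if y = w then x w else 0)"
    unfolding apply_op_def
  proof (rule sum.cong)
    fix y assume y: "y \<in> {y::'x list. length y = m}"
    show "x y * T y w = (if y = w then x w else 0)"
    proof (cases "y = w")
      case True then show ?thesis using assms(3) by simp
    next
      case False
      show ?thesis
      proof (cases "x y = 0")
        case True then show ?thesis using False by simp
      next
        case xy: False
        then have "y \<le> w" using assms(4) by (simp add: Bl_def)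
        then have yw: "y < w" using False by simp
        have "T y w = 0"
        proof -
          from red_op_row[OF assms(1), of y] y
          have "T y = delta y \<or> (\<forall>u. T y u \<noteq> 0 \<longrightarrow> u < y)" by simp
          then show ?thesis using yw False by (auto simp: delta_def)
        qed
        then show ?thesis using False by simp
      qed
    qed
  qed simp
  also have "\<dots> = x w" using assms(2) by (simp add: sum.delta[OF finite_words])
  finally show ?thesis .
qed

lemma lead_reducible:
  fixes T :: "'x::{finite,linorder} list \<Rightarrow> 'x list \<Rightarrow> 'k::field"
  assumes "red_op m T" "length w = m" "x \<in> ker_op m T" "Bl m w x" "x w \<noteq> 0"
  shows "T w \<noteq> delta w"
proof
  assume "T w = delta w"
  from apply_fixed[OF assms(1,2) this assms(4)] have "apply_op m T x w = x w" .
  moreover have "apply_op m T x w = 0" using assms(3) by (simp add: ker_op_def)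
  ultimately show False using assms(5) by simp
qed

section \<open>Existence and uniqueness of reduction operators\<close>

definition LW :: "nat \<Rightarrow> ('x::linorder list \<Rightarrow> 'k::field) set \<Rightarrow> 'x list set" where
  "LW m W = {w. length w = m \<and> (\<exists>v\<in>W. Bl m w v \<and> v w = 1)}"

definition Nsp :: "nat \<Rightarrow> ('x::linorder list \<Rightarrow> 'k::field) set \<Rightarrow> 'x list \<Rightarrow> ('x list \<Rightarrow> 'k) \<Rightarrow> bool" where
  "Nsp m W w n \<longleftrightarrow> n \<in> Vm m \<and> (\<forall>u. n u \<noteq> 0 \<longrightarrow> u \<le> w \<and> u \<notin> LW m W) \<and> (\<lambda>u. delta w u - n u) \<in> W"

lemma Max_supp:
  fixes v :: "'x::{finite,linorder} list \<Rightarrow> 'k::field"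
  assumes "v \<in> Vm m" "v \<noteq> (\<lambda>_. 0)"
  obtains w where "length w = m" "v w \<noteq> 0" "Bl m w v"
proof -
  let ?S = "{u. v u \<noteq> 0}"
  have fin: "finite ?S" using assms(1) by (auto simp: Vm_def intro: finite_subset[OF _ finite_words[of m]])
  have ne: "?S \<noteq> {}" using assms(2) by auto
  define w where "w = Max ?S"
  have "w \<in> ?S" using Max_in[OF fin ne] w_def by simp
  moreover have "\<forall>u. v u \<noteq> 0 \<longrightarrow> u \<le> w" using Max_ge[OF fin] w_def by simp
  ultimately show ?thesis using that assms(1) by (auto simp: Bl_def Vm_def)
qed

lemma zero_nonL:
  fixes W :: "('x::{finite,linorder} list \<Rightarrow> 'k::field) set"
  assumes W: "subsp m W" and v: "v \<in> W" and nl: "\<forall>u. v u \<noteq> 0 \<longrightarrow> u \<notin> LW m W"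
  shows "v = (\<lambda>_. 0)"
proof (rule ccontr)
  assume ne: "v \<noteq> (\<lambda>_. 0)"
  have vV: "v \<in> Vm m" using subsp_Vm[OF W v] .
  obtain w where w: "length w = m" "v w \<noteq> 0" "Bl m w v" using Max_supp[OF vV ne] by blast
  define v' where "v' = (\<lambda>u. inverse (v w) * v u)"
  have "v' \<in> W" unfolding v'_def using subsp_smult[OF W v] .
  moreover have "Bl m w v'" using w(3) unfolding Bl_def v'_def Vm_def by auto
  moreover have "v' w = 1" using w(2) by (simp add: v'_def)
  ultimately have "w \<in> LW m W" using w(1) by (auto simp: LW_def)
  then show False using nl w(2) by blast
qed

lemma Nsp_exists:
  fixes W :: "('x::{finite,linorder} list \<Rightarrow> 'k::field) set"
  assumes W: "subsp m W" and lw: "length w = m"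
  shows "\<exists>n. Nsp m W w n"
  using lw
proof (induction w rule: word_induct[of _ m])
  case (2 w)
  show ?case
  proof (cases "w \<in> LW m W")
    case False
    have "Nsp m W w (delta w)"
      using False 2(1) subsp_zero[OF W] delta_Vm[OF 2(1)] by (auto simp: Nsp_def delta_def)
    then show ?thesis by blast
  next
    case True
    then obtain v where v: "v \<in> W" "Bl m w v" "v w = 1" by (auto simp: LW_def)
    define U where "U = {u::'x list. length u = m \<and> u < w}"
    have finU: "finite U" unfolding U_def by (rule finite_subset[OF _ finite_words[of m]]) auto
    define nn where "nn = (\<lambda>u. SOME n. Nsp m W u n)"
    have nn: "\<And>u. u \<in> U \<Longrightarrow> Nsp m W u (nn u)"
    proof -
      fix u assume "u \<in> U"
      then have "\<exists>n. Nsp m W u n" using 2(2) by (simp add: U_def)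
      then show "Nsp m W u (nn u)" unfolding nn_def by (rule someI_ex)
    qed
    define d where "d = (\<lambda>u. delta w u - v u)"
    have dV: "d \<in> Vm m" using v(2) 2(1) by (auto simp: d_def Bl_def Vm_def delta_def)
    have dsupp: "\<And>u. d u \<noteq> 0 \<Longrightarrow> u \<in> U"
    proof -
      fix u assume du: "d u \<noteq> 0"
      then have lu: "length u = m" using dV by (auto simp: Vm_def)
      have "u \<noteq> w" using du v(3) by (auto simp: d_def)
      moreover have "u \<le> w"
      proof (rule ccontr)
        assume "\<not> u \<le> w"
        then have "delta w u = (0::'k)" "v u = 0" using v(2) by (auto simp: delta_def Bl_def)
        then show False using du by (simp add: d_def)
      qed
      ultimately show "u \<in> U" using lu by (simp add: U_def)
    qed
    define n where "n = (\<lambda>t. \<Sum>u\<in>U. d u * nn u t)"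
    have d_exp: "d = (\<lambda>t. \<Sum>u\<in>U. d u * delta u t)"
    proof
      fix t
      have "(\<Sum>u\<in>U. d u * delta u t) = (\<Sum>u\<in>U. if u = t then d t else 0)"
        by (rule sum.cong) (auto simp: delta_def)
      also have "\<dots> = d t" using dsupp finU by (auto simp: sum.delta)
      finally show "d t = (\<Sum>u\<in>U. d u * delta u t)" by simp
    qed
    have "Nsp m W w n"
      unfolding Nsp_def
    proof (intro conjI allI impI)
      show "n \<in> Vm m" unfolding n_def
        by (rule subsp_lincomb[OF Vm_subsp finU]) (use nn in \<open>auto simp: Nsp_def\<close>)
    next
      fix t assume "n t \<noteq> 0"
      then obtain u where u: "u \<in> U" "nn u t \<noteq> 0" unfolding n_def
        by (metis (mono_tags, lifting) mult_zero_right sum.neutral)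
      then have "t \<le> u" "t \<notin> LW m W" using nn[OF u(1)] by (auto simp: Nsp_def)
      moreover have "u < w" using u(1) by (simp add: U_def)
      ultimately show "t \<le> w" "t \<notin> LW m W" by auto
    next
      have A: "(\<lambda>t. \<Sum>u\<in>U. d u * (delta u t - nn u t)) \<in> W"
        by (rule subsp_lincomb[OF W finU]) (use nn in \<open>auto simp: Nsp_def\<close>)
      have "(\<lambda>t. delta w t - n t) = (\<lambda>t. v t + (\<Sum>u\<in>U. d u * (delta u t - nn u t)))"
      proof
        fix t
        have "(\<Sum>u\<in>U. d u * (delta u t - nn u t)) = d t - n t"
          using fun_cong[OF d_exp, of t] by (simp add: n_def right_diff_distrib sum_subtractf)
        then show "delta w t - n t = v t + (\<Sum>u\<in>U. d u * (delta u t - nn u t))"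
          by (simp add: d_def)
      qed
      then show "(\<lambda>t. delta w t - n t) \<in> W" using subsp_add[OF W v(1) A] by simp
    qed
    then show ?thesis by blast
  qed
qed (rule assms(2))

definition T0 :: "nat \<Rightarrow> ('x::linorder list \<Rightarrow> 'k::field) set \<Rightarrow> 'x list \<Rightarrow> 'x list \<Rightarrow> 'k" where
  "T0 m W w = (if length w = m then (SOME n. Nsp m W w n) else (\<lambda>_. 0))"

lemma T0_Nsp:
  fixes W :: "('x::{finite,linorder} list \<Rightarrow> 'k::field) set"
  assumes W: "subsp m W" and lw: "length w = m"
  shows "Nsp m W w (T0 m W w)"
proof -
  have "T0 m W w = (SOME n. Nsp m W w n)" using lw by (simp add: T0_def)
  then show ?thesis using someI_ex[OF Nsp_exists[OF W lw]] by simp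
qed

lemma T0_nonL:
  fixes W :: "('x::{finite,linorder} list \<Rightarrow> 'k::field) set"
  assumes W: "subsp m W" and lw: "length w = m" and nl: "w \<notin> LW m W"
  shows "T0 m W w = delta w"
proof -
  have N: "Nsp m W w (T0 m W w)" using T0_Nsp[OF W lw] .
  let ?d = "\<lambda>u. (delta w u - T0 m W w u) - (delta w u - delta w u)"
  have "?d \<in> W" using subsp_diff[OF W] N subsp_zero[OF W] by (auto simp: Nsp_def)
  moreover have "\<forall>u. ?d u \<noteq> 0 \<longrightarrow> u \<notin> LW m W"
    using N nl by (auto simp: Nsp_def delta_def)
  ultimately have "?d = (\<lambda>_. 0)" using zero_nonL[OF W] by blast
  then have "\<And>u. T0 m W w u = delta w u"
  proof -
    fix u
    from fun_cong[OF \<open>?d = (\<lambda>_. 0)\<close>, of u] show "T0 m W w u = delta w u" by simp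
  qed
  then show ?thesis by (rule ext)
qed

context
  fixes W :: "('x::{finite,linorder} list \<Rightarrow> 'k::field) set" and m :: nat
  assumes W: "subsp m W"
begin

lemma T0_supp: "opsupp m (T0 m W)"
  unfolding opsupp_def
proof (intro allI impI)
  fix w u assume h: "T0 m W w u \<noteq> 0"
  then have lw: "length w = m" by (auto simp: T0_def split: if_splits)
  have "T0 m W w \<in> Vm m" using T0_Nsp[OF W lw] by (simp add: Nsp_def)
  then have "length u = m" using h by (simp add: Vm_def)
  then show "length w = m \<and> length u = m" using lw by simp
qed

lemma T0_rowNL: "T0 m W w u \<noteq> 0 \<Longrightarrow> u \<notin> LW m W"
proof -
  assume h: "T0 m W w u \<noteq> 0"
  then have "length w = m" by (auto simp: T0_def split: if_splits)
  from T0_Nsp[OF W this] h show "u \<notin> LW m W" by (simp add: Nsp_def)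
qed

lemma T0_idem: "comp m (T0 m W) (T0 m W) = T0 m W"
proof (intro ext)
  fix w u
  show "comp m (T0 m W) (T0 m W) w u = T0 m W w u"
  proof (cases "length w = m")
    case False then show ?thesis by (simp add: comp_def T0_def)
  next
    case True
    have "comp m (T0 m W) (T0 m W) w u = (\<Sum>y\<in>{y. length y = m}. T0 m W w y * delta y u)"
      unfolding comp_def
    proof (rule sum.cong)
      fix y assume y: "y \<in> {y::'x list. length y = m}"
      show "T0 m W w y * T0 m W y u = T0 m W w y * delta y u"
      proof (cases "T0 m W w y = 0")
        case False
        then have "y \<notin> LW m W" using T0_rowNL by blast
        then have "T0 m W y = delta y" using T0_nonL[OF W] y by simp
        then show ?thesis by simp
      qed simp
    qed simp
    also have "\<dots> = T0 m W w u"
    proof -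
      have "T0 m W w \<in> Vm m" using T0_Nsp[OF W True] by (simp add: Nsp_def)
      from fun_cong[OF vec_expand[OF this], of u] show ?thesis by simp
    qed
    finally show ?thesis .
  qed
qed

lemma T0_tri: "length w = m \<Longrightarrow> T0 m W w = delta w \<or> (\<forall>u. T0 m W w u \<noteq> 0 \<longrightarrow> lexless u w)"
proof -
  assume lw: "length w = m"
  show "T0 m W w = delta w \<or> (\<forall>u. T0 m W w u \<noteq> 0 \<longrightarrow> lexless u w)"
  proof (cases "w \<in> LW m W")
    case False then show ?thesis using T0_nonL[OF W lw] by simp
  next
    case True
    have "\<forall>u. T0 m W w u \<noteq> 0 \<longrightarrow> lexless u w"
    proof (intro allI impI)
      fix u assume u: "T0 m W w u \<noteq> 0"
      have N: "Nsp m W w (T0 m W w)" using T0_Nsp[OF W lw] .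
      have ul: "u \<le> w" "u \<notin> LW m W" using N u by (auto simp: Nsp_def)
      have lu: "length u = m" using N u by (auto simp: Nsp_def Vm_def)
      have "u \<noteq> w" using True ul(2) by auto
      then have "u < w" using ul(1) by simp
      then show "lexless u w" using lexless_iff[of u w] lw lu by simp
    qed
    then show ?thesis by simp
  qed
qed

lemma T0_redop: "red_op m (T0 m W)"
  using T0_supp T0_idem T0_tri unfolding red_op_def opsupp_def by blast

lemma T0_diffW: "v \<in> Vm m \<Longrightarrow> (\<lambda>u. v u - apply_op m (T0 m W) v u) \<in> W"
proof -
  assume v: "v \<in> Vm m"
  have e: "(\<lambda>u. v u - apply_op m (T0 m W) v u)
      = (\<lambda>u. \<Sum>w\<in>{w. length w = m}. v w * (delta w u - T0 m W w u))"
  proof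
    fix u
    have "v u = (\<Sum>w\<in>{w. length w = m}. v w * delta w u)"
      using fun_cong[OF vec_expand[OF v], of u] .
    then show "v u - apply_op m (T0 m W) v u = (\<Sum>w\<in>{w. length w = m}. v w * (delta w u - T0 m W w u))"
      unfolding apply_op_def by (simp add: right_diff_distrib sum_subtractf)
  qed
  have "\<And>w. w \<in> {w. length w = m} \<Longrightarrow> (\<lambda>u. delta w u - T0 m W w u) \<in> W"
    using T0_Nsp[OF W] by (simp add: Nsp_def)
  from subsp_lincomb[OF W finite_words this, where c = v] e
  show "(\<lambda>u. v u - apply_op m (T0 m W) v u) \<in> W" by simp
qed

lemma T0_appNL: "apply_op m (T0 m W) v u \<noteq> 0 \<Longrightarrow> u \<notin> LW m W"
proof -
  assume "apply_op m (T0 m W) v u \<noteq> 0"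
  then obtain y where "v y * T0 m W y u \<noteq> 0" unfolding apply_op_def
    by (meson sum.not_neutral_contains_not_neutral)
  then have "T0 m W y u \<noteq> 0" by auto
  then show "u \<notin> LW m W" using T0_rowNL by blast
qed

lemma T0_ker: "ker_op m (T0 m W) = W"
proof
  show "ker_op m (T0 m W) \<subseteq> W"
  proof
    fix v assume "v \<in> ker_op m (T0 m W)"
    then have v: "v \<in> Vm m" "apply_op m (T0 m W) v = (\<lambda>_. 0)" by (auto simp: ker_op_def)
    from T0_diffW[OF v(1)] v(2) show "v \<in> W" by simp
  qed
next
  show "W \<subseteq> ker_op m (T0 m W)"
  proof
    fix v assume vW: "v \<in> W"
    then have vV: "v \<in> Vm m" using subsp_Vm[OF W] by blast
    have "(\<lambda>u. v u - (v u - apply_op m (T0 m W) v u)) \<in> W"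
      using subsp_diff[OF W vW T0_diffW[OF vV]] .
    then have "apply_op m (T0 m W) v \<in> W" by simp
    moreover have "\<forall>u. apply_op m (T0 m W) v u \<noteq> 0 \<longrightarrow> u \<notin> LW m W" using T0_appNL by blast
    ultimately have "apply_op m (T0 m W) v = (\<lambda>_. 0)" using zero_nonL[OF W] by blast
    then show "v \<in> ker_op m (T0 m W)" using vV by (simp add: ker_op_def)
  qed
qed

end

lemma T0_red:
  fixes W :: "('x::{finite,linorder} list \<Rightarrow> 'k::field) set"
  assumes W: "subsp m W"
  shows "red_op m (T0 m W) \<and> ker_op m (T0 m W) = W"
  using T0_redop[OF W] T0_ker[OF W] by simp

lemma red_op_unique:
  fixes W :: "('x::{finite,linorder} list \<Rightarrow> 'k::field) set"
  assumes W: "subsp m W" and T: "red_op m T" and kT: "ker_op m T = W"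
  shows "T = T0 m W"
proof (intro ext)
  fix w u
  show "T w u = T0 m W w u"
  proof (cases "length w = m")
    case False
    then show ?thesis using red_op_supp[OF T] by (auto simp: opsupp_def T0_def)
  next
    case lw: True
    have sup: "opsupp m T" using red_op_supp[OF T] .
    have fixedNL: "\<And>u. length u = m \<Longrightarrow> T u = delta u \<Longrightarrow> u \<notin> LW m W"
    proof
      fix u assume lu: "length u = m" and Tu: "T u = delta u" and uL: "u \<in> LW m W"
      then obtain v where v: "v \<in> W" "Bl m u v" "v u = 1" by (auto simp: LW_def)
      have "apply_op m T v u = 1" using apply_fixed[OF T lu Tu v(2)] v(3) by simp
      moreover have "apply_op m T v = (\<lambda>_. 0)" using v(1) kT by (auto simp: ker_op_def)
      ultimately show False by simp
    qed
    have rowfixed: "\<forall>y. T w y \<noteq> 0 \<longrightarrow> T y = delta y"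
    proof (rule ccontr)
      assume "\<not> (\<forall>y. T w y \<noteq> 0 \<longrightarrow> T y = delta y)"
      then have ne: "{y. T w y \<noteq> 0 \<and> T y \<noteq> delta y} \<noteq> {}" by auto
      have fin: "finite {y. T w y \<noteq> 0 \<and> T y \<noteq> delta y}"
        by (rule finite_subset[OF _ finite_words[of m]]) (use sup in \<open>auto simp: opsupp_def\<close>)
      define u0 where "u0 = Max {y. T w y \<noteq> 0 \<and> T y \<noteq> delta y}"
      have u0: "T w u0 \<noteq> 0" "T u0 \<noteq> delta u0" using Max_in[OF fin ne] u0_def by auto
      have u0max: "\<And>y. T w y \<noteq> 0 \<Longrightarrow> T y \<noteq> delta y \<Longrightarrow> y \<le> u0"
        using Max_ge[OF fin] u0_def by auto
      have lu0: "length u0 = m" using u0(1) sup by (auto simp: opsupp_def)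
      have "comp m T T w u0 = (\<Sum>y\<in>{y::'x list. length y = m}. 0)"
        unfolding comp_def
      proof (rule sum.cong)
        fix y assume y: "y \<in> {y::'x list. length y = m}"
        show "T w y * T y u0 = 0"
        proof (cases "T w y = 0")
          case False
          show ?thesis
          proof (cases "T y = delta y")
            case True
            then have "y \<noteq> u0" using u0(2) by auto
            then show ?thesis using True by (simp add: delta_def)
          next
            case nf: False
            then have "y \<le> u0" using u0max False by blast
            moreover have "T y u0 \<noteq> 0 \<longrightarrow> u0 < y" using red_op_row[OF T, of y] y nf by auto
            ultimately show ?thesis by auto
          qed
        qed simp
      qed simp
      then have "T w u0 = 0" using red_op_idem[OF T] by simp
      then show False using u0(1) by simp
    qed
    have k1: "(\<lambda>t. delta w t - T w t) \<in> W"
    proof -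
      have "apply_op m T (\<lambda>t. delta w t - T w t) = (\<lambda>t. T w t - comp m T T w t)"
        using apply_op_diff[of m T "delta w" "T w"] apply_op_delta[OF lw, of T] comp_row[OF lw, of T T]
        by simp
      also have "\<dots> = (\<lambda>_. 0)" using red_op_idem[OF T] by simp
      finally have ap: "apply_op m T (\<lambda>t. delta w t - T w t) = (\<lambda>_. 0)" .
      have Tw: "T w \<in> Vm m" using apply_op_Vm[OF sup, of "delta w"] apply_op_delta[OF lw, of T] by simp
      have "(\<lambda>t. delta w t - T w t) \<in> Vm m" using subsp_diff[OF Vm_subsp delta_Vm[OF lw] Tw] .
      then show ?thesis using ap kT[symmetric] by (simp add: ker_op_def)
    qed
    have k2: "(\<lambda>t. delta w t - T0 m W w t) \<in> W" using T0_Nsp[OF W lw] by (simp add: Nsp_def)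
    let ?d = "\<lambda>t. (delta w t - T0 m W w t) - (delta w t - T w t)"
    have "?d \<in> W" using subsp_diff[OF W k2 k1] .
    moreover have "\<forall>t. ?d t \<noteq> 0 \<longrightarrow> t \<notin> LW m W"
    proof (intro allI impI)
      fix t assume "?d t \<noteq> 0"
      then have "T w t \<noteq> 0 \<or> T0 m W w t \<noteq> 0" by auto
      then show "t \<notin> LW m W"
      proof
        assume "T w t \<noteq> 0"
        then show ?thesis using rowfixed fixedNL sup by (auto simp: opsupp_def)
      next
        assume "T0 m W w t \<noteq> 0"
        then show ?thesis using T0_Nsp[OF W lw] by (auto simp: Nsp_def)
      qed
    qed
    ultimately have "?d = (\<lambda>_. 0)" using zero_nonL[OF W] by blast
    from fun_cong[OF this, of u] show ?thesis by simp
  qed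
qed

lemma theta_inv_props:
  fixes W :: "('x::{finite,linorder} list \<Rightarrow> 'k::field) set"
  assumes W: "subsp m W"
  shows "red_op m (theta_inv m W) \<and> ker_op m (theta_inv m W) = W"
proof -
  have "\<exists>!T. red_op m T \<and> ker_op m T = W"
  proof (rule ex1I[of _ "T0 m W"])
    show "red_op m (T0 m W) \<and> ker_op m (T0 m W) = W" by (rule T0_red[OF W])
  next
    fix T assume "red_op m T \<and> ker_op m T = W"
    then show "T = T0 m W" using red_op_unique[OF W, of T] by simp
  qed
  from theI'[OF this] show ?thesis unfolding theta_inv_def .
qed

definition msum :: "('x list \<Rightarrow> 'k::field) set \<Rightarrow> ('x list \<Rightarrow> 'k) set \<Rightarrow> ('x list \<Rightarrow> 'k) set" where
  "msum A B = {(\<lambda>u. v1 u + v2 u) | v1 v2. v1 \<in> A \<and> v2 \<in> B}"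

lemma msum_I: "v1 \<in> A \<Longrightarrow> v2 \<in> B \<Longrightarrow> (\<lambda>u. v1 u + v2 u) \<in> msum A B"
  unfolding msum_def by blast

lemma msum_E: "v \<in> msum A B \<Longrightarrow> (\<And>v1 v2. v1 \<in> A \<Longrightarrow> v2 \<in> B \<Longrightarrow> v = (\<lambda>u. v1 u + v2 u) \<Longrightarrow> P) \<Longrightarrow> P"
  unfolding msum_def by blast

lemma msum_subsp:
  fixes A B :: "('x list \<Rightarrow> 'k::field) set"
  assumes A: "subsp m A" and B: "subsp m B" shows "subsp m (msum A B)"
  unfolding subsp_def
proof (intro conjI ballI allI subsetI)
  fix x assume "x \<in> msum A B"
  then obtain v1 v2 where "v1 \<in> A" "v2 \<in> B" "x = (\<lambda>u. v1 u + v2 u)" by (rule msum_E)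
  then show "x \<in> Vm m" using subsp_add[OF Vm_subsp subsp_Vm[OF A] subsp_Vm[OF B]] by simp
next
  have "(\<lambda>u. (\<lambda>_. 0) u + (\<lambda>_. 0) u) \<in> msum A B" by (rule msum_I[OF subsp_zero[OF A] subsp_zero[OF B]])
  then show "(\<lambda>_. 0) \<in> msum A B" by simp
next
  fix a b assume "a \<in> msum A B" "b \<in> msum A B"
  obtain a1 a2 where ha: "a1 \<in> A" "a2 \<in> B" "a = (\<lambda>u. a1 u + a2 u)"
    using \<open>a \<in> msum A B\<close> by (rule msum_E)
  obtain b1 b2 where hb: "b1 \<in> A" "b2 \<in> B" "b = (\<lambda>u. b1 u + b2 u)"
    using \<open>b \<in> msum A B\<close> by (rule msum_E)
  note h = ha(3) hb(3) ha(1) ha(2) hb(1) hb(2)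
  have "(\<lambda>u. (\<lambda>u. a1 u + b1 u) u + (\<lambda>u. a2 u + b2 u) u) \<in> msum A B"
    by (rule msum_I[OF subsp_add[OF A h(3,5)] subsp_add[OF B h(4,6)]])
  moreover have "(\<lambda>u. (\<lambda>u. a1 u + b1 u) u + (\<lambda>u. a2 u + b2 u) u) = (\<lambda>u. a u + b u)"
    using h(1,2) by (auto simp: algebra_simps)
  ultimately show "(\<lambda>u. a u + b u) \<in> msum A B" by simp
next
  fix c a assume "a \<in> msum A B"
  obtain a1 a2 where h0: "a1 \<in> A" "a2 \<in> B" "a = (\<lambda>u. a1 u + a2 u)"
    using \<open>a \<in> msum A B\<close> by (rule msum_E)
  note h = h0(3) h0(1) h0(2)
  have "(\<lambda>u. (\<lambda>u. c * a1 u) u + (\<lambda>u. c * a2 u) u) \<in> msum A B"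
    by (rule msum_I[OF subsp_smult[OF A h(2)] subsp_smult[OF B h(3)]])
  moreover have "(\<lambda>u. (\<lambda>u. c * a1 u) u + (\<lambda>u. c * a2 u) u) = (\<lambda>u. c * a u)"
    using h(1) by (auto simp: algebra_simps)
  ultimately show "(\<lambda>u. c * a u) \<in> msum A B" by simp
qed

lemma inter_subsp: "subsp m A \<Longrightarrow> subsp m B \<Longrightarrow> subsp m (A \<inter> B)"
  by (auto simp add: subsp_def)

lemma ker_vee:
  fixes T1 :: "'x::{finite,linorder} list \<Rightarrow> 'x list \<Rightarrow> 'k::field"
  shows "ker_op m (vee m T1 T2) = ker_op m T1 \<inter> ker_op m T2"
proof -
  have "subsp m (ker_op m T1 \<inter> ker_op m T2)" by (rule inter_subsp[OF ker_subsp ker_subsp])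
  from theta_inv_props[OF this] show ?thesis unfolding vee_def by blast
qed

lemma ker_wedge:
  fixes T1 :: "'x::{finite,linorder} list \<Rightarrow> 'x list \<Rightarrow> 'k::field"
  shows "ker_op m (wedge m T1 T2) = msum (ker_op m T1) (ker_op m T2)"
proof -
  have "subsp m (msum (ker_op m T1) (ker_op m T2))" by (rule msum_subsp[OF ker_subsp ker_subsp])
  have e: "wedge m T1 T2 = theta_inv m (msum (ker_op m T1) (ker_op m T2))"
    unfolding wedge_def msum_def by (rule refl)
  from theta_inv_props[OF \<open>subsp m (msum (ker_op m T1) (ker_op m T2))\<close>] show ?thesis
    unfolding e by blast
qed




lemma split2: "length w = i + j \<Longrightarrow> \<exists>x y. w = x @ y \<and> length x = i \<and> length y = j"
  by (rule exI[of _ "take i w"], rule exI[of _ "drop i w"]) simp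

lemma split3: "length w = a + n + b \<Longrightarrow> \<exists>p y s. w = p @ y @ s \<and> length p = a \<and> length y = n \<and> length s = b"
proof -
  assume "length w = a + n + b"
  then obtain p r where "w = p @ r" "length p = a" "length r = n + b" using split2[of w a "n+b"] by auto
  moreover obtain y s where "r = y @ s" "length y = n" "length s = b" using split2[OF calculation(3)] by auto
  ultimately show ?thesis by blast
qed

lemma sum_mid:
  fixes g :: "'x::finite list \<Rightarrow> 'k::comm_monoid_add"
  assumes lp: "length p = a" and ls: "length s = b"
    and vanish: "\<And>z. length z = a + n + b \<Longrightarrow> g z \<noteq> 0 \<Longrightarrow> take a z = p \<and> drop (a + n) z = s"
  shows "(\<Sum>z\<in>{z. length z = a + n + b}. g z) = (\<Sum>y\<in>{y. length y = n}. g (p @ y @ s))"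
proof -
  have inj: "inj_on (\<lambda>y. p @ y @ s) {y. length y = n}" by (auto simp: inj_on_def)
  have "(\<Sum>y\<in>{y. length y = n}. g (p @ y @ s)) = (\<Sum>z\<in>(\<lambda>y. p @ y @ s) ` {y. length y = n}. g z)"
    by (simp add: sum.reindex[OF inj])
  also have "\<dots> = (\<Sum>z\<in>{z. length z = a + n + b}. g z)"
  proof (rule sum.mono_neutral_left[OF finite_words])
    show "(\<lambda>y. p @ y @ s) ` {y. length y = n} \<subseteq> {z. length z = a + n + b}" using lp ls by auto
  next
    show "\<forall>z\<in>{z. length z = a + n + b} - (\<lambda>y. p @ y @ s) ` {y. length y = n}. g z = 0"
    proof
      fix z assume z: "z \<in> {z. length z = a + n + b} - (\<lambda>y. p @ y @ s) ` {y. length y = n}"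
      show "g z = 0"
      proof (rule ccontr)
        assume "g z \<noteq> 0"
        then have td: "take a z = p" "drop (a + n) z = s" using vanish z by auto
        obtain p' y s' where d: "z = p' @ y @ s'" "length p' = a" "length y = n" "length s' = b"
          using split3 z by blast
        have "p' = p" "s' = s" using td d by auto
        then have "z \<in> (\<lambda>y. p @ y @ s) ` {y. length y = n}" using d by auto
        then show False using z by blast
      qed
    qed
  qed
  finally show ?thesis by simp
qed

lemma embed_split:
  assumes "length p = a" "length y = n" "length s = b" "length p' = a" "length y' = n" "length s' = b"
  shows "embed a n b T (p @ y @ s) (p' @ y' @ s') = (if p' = p \<and> s' = s then T y y' else 0)"
  using assms by (auto simp: embed_def)

lemma embed_zero:
  assumes "embed a n b T w u \<noteq> 0"
  shows "length w = a + n + b \<and> length u = a + n + b \<and> take a u = take a w \<and> drop (a + n) u = drop (a + n) w"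
  using assms by (auto simp: embed_def split: if_splits)

lemma embed_comp:
  fixes A :: "'x::finite list \<Rightarrow> 'x list \<Rightarrow> 'k::field"
  shows "embed a n b (comp n A B) = comp (a + n + b) (embed a n b A) (embed a n b B)"
proof (intro ext)
  fix w u
  show "embed a n b (comp n A B) w u = comp (a + n + b) (embed a n b A) (embed a n b B) w u"
  proof (cases "length w = a + n + b \<and> length u = a + n + b")
    case False
    then have "embed a n b (comp n A B) w u = 0" by (auto simp: embed_def)
    moreover have "comp (a + n + b) (embed a n b A) (embed a n b B) w u = 0"
      unfolding comp_def
    proof (rule sum.neutral, intro ballI)
      fix z
      show "embed a n b B w z * embed a n b A z u = 0"
        using False embed_zero[of a n b B w z] embed_zero[of a n b A z u] by auto
    qed
    ultimately show ?thesis by simp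
  next
    case True
    obtain p y s where w: "w = p @ y @ s" "length p = a" "length y = n" "length s = b"
      using split3 True by blast
    obtain p' y' s' where u: "u = p' @ y' @ s'" "length p' = a" "length y' = n" "length s' = b"
      using split3 True by blast
    have "comp (a + n + b) (embed a n b A) (embed a n b B) w u
        = (\<Sum>x\<in>{x. length x = n}. embed a n b B w (p @ x @ s) * embed a n b A (p @ x @ s) u)"
      unfolding comp_def
    proof (rule sum_mid[OF w(2) w(4)])
      fix z assume "length z = a + n + b" "embed a n b B w z * embed a n b A z u \<noteq> 0"
      then have "embed a n b B w z \<noteq> 0" by auto
      from embed_zero[OF this] show "take a z = p \<and> drop (a + n) z = s" using w by simp
    qed
    also have "\<dots> = (\<Sum>x\<in>{x. length x = n}. (if p' = p \<and> s' = s then B y x * A x y' else 0))"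
      by (rule sum.cong) (use w u in \<open>auto simp: embed_split\<close>)
    also have "\<dots> = embed a n b (comp n A B) w u"
      using w u by (auto simp: embed_split comp_def)
    finally show ?thesis by simp
  qed
qed

lemma embed_idop:
  "embed a n b (idop n) = idop (a + n + b)"
proof (intro ext)
  fix w u
  show "embed a n b (idop n) w u = idop (a + n + b) w u"
  proof (cases "length w = a + n + b \<and> length u = a + n + b")
    case False then show ?thesis by (auto simp: embed_def idop_def)
  next
    case True
    obtain p y s where w: "w = p @ y @ s" "length p = a" "length y = n" "length s = b"
      using split3 True by blast
    obtain p' y' s' where u: "u = p' @ y' @ s'" "length p' = a" "length y' = n" "length s' = b"
      using split3 True by blast
    show ?thesis using w u by (auto simp: embed_split idop_def)
  qed
qed

lemma embed_braid:
  fixes t :: "'x::finite list \<Rightarrow> 'x list \<Rightarrow> 'k::field"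
  shows "embed a n b (braid n t s k) = braid (a + n + b) (embed a n b t) (embed a n b s) k"
proof (induction k arbitrary: t s)
  case 0 then show ?case by (simp add: embed_idop)
next
  case (Suc k) then show ?case by (simp add: embed_comp)
qed

lemma embed_embed:
  "embed a (c + N + d) b (embed c N d S) = embed (a + c) N (d + b) S"
proof (intro ext)
  fix w u
  show "embed a (c + N + d) b (embed c N d S) w u = embed (a + c) N (d + b) S w u"
  proof (cases "length w = a + c + N + d + b \<and> length u = a + c + N + d + b")
    case False then show ?thesis by (auto simp: embed_def)
  next
    case True
    obtain p r where w1: "w = p @ r" "length p = a" "length r = c + N + d + b"
      using split2[of w a "c + N + d + b"] True by auto
    obtain q x s t where w2: "r = q @ x @ s @ t" "length q = c" "length x = N" "length s = d" "length t = b"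
    proof -
      obtain q r2 where "r = q @ r2" "length q = c" "length r2 = N + d + b" using split2[of r c "N+d+b"] w1 by auto
      moreover obtain x s t where "r2 = x @ s @ t" "length x = N" "length s = d" "length t = b"
        using split3[of r2 N d b] calculation by auto
      ultimately show ?thesis using that by blast
    qed
    obtain p' r' where u1: "u = p' @ r'" "length p' = a" "length r' = c + N + d + b"
      using split2[of u a "c + N + d + b"] True by auto
    obtain q' x' s' t' where u2: "r' = q' @ x' @ s' @ t'" "length q' = c" "length x' = N" "length s' = d" "length t' = b"
    proof -
      obtain q r2 where "r' = q @ r2" "length q = c" "length r2 = N + d + b" using split2[of r' c "N+d+b"] u1 by auto
      moreover obtain x s t where "r2 = x @ s @ t" "length x = N" "length s = d" "length t = b"
        using split3[of r2 N d b] calculation by auto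
      ultimately show ?thesis using that by blast
    qed
    show ?thesis using w1 w2 u1 u2 by (simp add: embed_def)
  qed
qed

lemma embed_red:
  fixes T :: "'x::{finite,linorder} list \<Rightarrow> 'x list \<Rightarrow> 'k::field"
  assumes T: "red_op n T"
  shows "red_op (a + n + b) (embed a n b T)"
  unfolding red_op_def
proof (intro conjI allI impI)
  fix w u assume "embed a n b T w u \<noteq> 0"
  from embed_zero[OF this] show "length w = a + n + b" "length u = a + n + b" by auto
next
  show "comp (a + n + b) (embed a n b T) (embed a n b T) = embed a n b T"
    using embed_comp[of a n b T T] red_op_idem[OF T] by simp
next
  fix w :: "'x list" assume lw: "length w = a + n + b"
  obtain p y s where w: "w = p @ y @ s" "length p = a" "length y = n" "length s = b"
    using split3 lw by blast
  show "embed a n b T w = delta w \<or> (\<forall>u. embed a n b T w u \<noteq> 0 \<longrightarrow> lexless u w)"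
  proof (cases "T y = delta y")
    case True
    have "embed a n b T w = delta w"
    proof
      fix u
      show "embed a n b T w u = delta w u"
      proof (cases "length u = a + n + b")
        case False then show ?thesis using lw by (auto simp: embed_def delta_def)
      next
        case True
        obtain p' y' s' where u: "u = p' @ y' @ s'" "length p' = a" "length y' = n" "length s' = b"
          using split3 True by blast
        show ?thesis using w u \<open>T y = delta y\<close> by (auto simp: embed_split delta_def)
      qed
    qed
    then show ?thesis by simp
  next
    case False
    have "T y = delta y \<or> (\<forall>u. T y u \<noteq> 0 \<longrightarrow> lexless u y)" using T w(3) by (simp add: red_op_def)
    then have row: "\<forall>u. T y u \<noteq> 0 \<longrightarrow> lexless u y" using False by simp
    have "\<forall>u. embed a n b T w u \<noteq> 0 \<longrightarrow> lexless u w"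
    proof (intro allI impI)
      fix u assume ne: "embed a n b T w u \<noteq> 0"
      then have "length u = a + n + b" using embed_zero by blast
      then obtain p' y' s' where u: "u = p' @ y' @ s'" "length p' = a" "length y' = n" "length s' = b"
        using split3 by blast
      have "p' = p" "s' = s" "T y y' \<noteq> 0" using ne w u by (auto simp: embed_split split: if_splits)
      then have "lexless y' y" using row by blast
      then obtain q c1 c2 r1 r2 where "y' = q @ c1 # r1" "y = q @ c2 # r2" "c1 < c2"
        unfolding lexless_def by blast
      then show "lexless u w" unfolding lexless_def using u w \<open>p' = p\<close> \<open>s' = s\<close>
        by (intro exI[of _ "p @ q"] exI[of _ c1] exI[of _ c2] exI[of _ "r1 @ s"] exI[of _ "r2 @ s"]) simp
    qed
    then show ?thesis by simp
  qed
qed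

definition sl :: "nat \<Rightarrow> 'x list \<Rightarrow> 'x list \<Rightarrow> ('x list \<Rightarrow> 'k::field) \<Rightarrow> 'x list \<Rightarrow> 'k" where
  "sl n p s v = (\<lambda>y. if length y = n then v (p @ y @ s) else 0)"

lemma sl_Vm: "sl n p s v \<in> Vm n" by (auto simp: sl_def Vm_def)

lemma apply_embed:
  fixes T :: "'x::finite list \<Rightarrow> 'x list \<Rightarrow> 'k::field"
  assumes "length p = a" "length u = n" "length s = b"
  shows "apply_op (a + n + b) (embed a n b T) v (p @ u @ s) = apply_op n T (sl n p s v) u"
proof -
  have "apply_op (a + n + b) (embed a n b T) v (p @ u @ s)
      = (\<Sum>y\<in>{y. length y = n}. v (p @ y @ s) * embed a n b T (p @ y @ s) (p @ u @ s))"
    unfolding apply_op_def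
  proof (rule sum_mid[OF assms(1,3)])
    fix z assume "length z = a + n + b" "v z * embed a n b T z (p @ u @ s) \<noteq> 0"
    then have "embed a n b T z (p @ u @ s) \<noteq> 0" by auto
    from embed_zero[OF this] show "take a z = p \<and> drop (a + n) z = s" using assms by simp
  qed
  also have "\<dots> = (\<Sum>y\<in>{y. length y = n}. sl n p s v y * T y u)"
    by (rule sum.cong) (use assms in \<open>auto simp: embed_split sl_def\<close>)
  finally show ?thesis by (simp add: apply_op_def)
qed

lemma ker_embed:
  fixes T :: "'x::finite list \<Rightarrow> 'x list \<Rightarrow> 'k::field"
  assumes T: "opsupp n T" and v: "v \<in> Vm (a + n + b)"
  shows "v \<in> ker_op (a + n + b) (embed a n b T) \<longleftrightarrow>
    (\<forall>p s. length p = a \<longrightarrow> length s = b \<longrightarrow> sl n p s v \<in> ker_op n T)"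
proof
  assume k: "v \<in> ker_op (a + n + b) (embed a n b T)"
  show "\<forall>p s. length p = a \<longrightarrow> length s = b \<longrightarrow> sl n p s v \<in> ker_op n T"
  proof (intro allI impI)
    fix p s :: "'x list" assume lp: "length p = a" and ls: "length s = b"
    have "apply_op n T (sl n p s v) = (\<lambda>_. 0)"
    proof
      fix u show "apply_op n T (sl n p s v) u = 0"
      proof (cases "length u = n")
        case True
        have "apply_op (a + n + b) (embed a n b T) v (p @ u @ s) = 0" using k by (simp add: ker_op_def)
        then show ?thesis using apply_embed[OF lp True ls, of T v] by simp
      next
        case False then show ?thesis using apply_op_Vm[OF T] by (auto simp: Vm_def)
      qed
    qed
    then show "sl n p s v \<in> ker_op n T" by (simp add: ker_op_def sl_Vm)
  qed
next
  assume h: "\<forall>p s. length p = a \<longrightarrow> length s = b \<longrightarrow> sl n p s v \<in> ker_op n T"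
  have "apply_op (a + n + b) (embed a n b T) v = (\<lambda>_. 0)"
  proof
    fix z show "apply_op (a + n + b) (embed a n b T) v z = 0"
    proof (cases "length z = a + n + b")
      case True
      then obtain p y s where z: "z = p @ y @ s" "length p = a" "length y = n" "length s = b"
        using split3 by blast
      have "apply_op n T (sl n p s v) = (\<lambda>_. 0)" using h z by (simp add: ker_op_def)
      then show ?thesis using apply_embed[OF z(2) z(3) z(4), of T v] z(1) by simp
    next
      case False
      have "opsupp (a + n + b) (embed a n b T)" unfolding opsupp_def using embed_zero by blast
      then show ?thesis using apply_op_Vm False by (auto simp: Vm_def)
    qed
  qed
  then show "v \<in> ker_op (a + n + b) (embed a n b T)" using v by (simp add: ker_op_def)
qed




lemma lm_char:
  fixes f :: "'x::{finite,linorder} list \<Rightarrow> 'k::field"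
  assumes fV: "f \<in> Vm N" and fn: "f \<noteq> (\<lambda>_. 0)"
  shows "f (lm f) \<noteq> 0 \<and> (\<forall>u. f u \<noteq> 0 \<longrightarrow> u \<le> lm f) \<and> length (lm f) = N"
proof -
  obtain w where w: "length w = N" "f w \<noteq> 0" "Bl N w f" using Max_supp[OF fV fn] by blast
  have le: "\<And>u. f u \<noteq> 0 \<Longrightarrow> u \<le> w \<and> length u = N" using w(3) by (auto simp: Bl_def Vm_def)
  have P: "f w \<noteq> 0 \<and> (\<forall>u. f u \<noteq> 0 \<longrightarrow> u = w \<or> lexless u w)"
  proof (intro conjI allI impI)
    fix u assume "f u \<noteq> 0"
    then have "u \<le> w" "length u = N" using le by auto
    then show "u = w \<or> lexless u w" using lexless_iff[of u w] w(1) by auto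
  qed (rule w(2))
  have "lm f = w"
    unfolding lm_def
  proof (rule the_equality)
    show "f w \<noteq> 0 \<and> (\<forall>u. f u \<noteq> 0 \<longrightarrow> u = w \<or> lexless u w)" by (rule P)
  next
    fix w' assume P': "f w' \<noteq> 0 \<and> (\<forall>u. f u \<noteq> 0 \<longrightarrow> u = w' \<or> lexless u w')"
    then have "w' \<le> w" "length w' = N" using le by auto
    moreover have "w = w' \<or> lexless w w'" using P' w(2) by blast
    ultimately show "w' = w" using lexless_iff[of w w'] w(1) by auto
  qed
  then show ?thesis using w le by auto
qed

context
  fixes N :: nat and R :: "('x::{finite,linorder} list \<Rightarrow> 'k::field) set"
  assumes red: "reduced_hom_pres N R"
begin

lemma R_Vm: "f \<in> R \<Longrightarrow> f \<in> Vm N" using red by (auto simp: reduced_hom_pres_def)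

lemma R_lm: "f \<in> R \<Longrightarrow> f (lm f) = 1 \<and> (\<forall>u. f u \<noteq> 0 \<longrightarrow> u \<le> lm f) \<and> length (lm f) = N"
proof -
  assume f: "f \<in> R"
  have "f \<noteq> (\<lambda>_. 0)" "f (lm f) = 1" using red f by (auto simp: reduced_hom_pres_def)
  with lm_char[OF R_Vm[OF f]] show ?thesis by simp
qed

lemma R_inj: "f \<in> R \<Longrightarrow> g \<in> R \<Longrightarrow> lm f = lm g \<Longrightarrow> f = g"
proof (rule ccontr)
  assume f: "f \<in> R" and g: "g \<in> R" and e: "lm f = lm g" and ne: "f \<noteq> g"
  have "\<not> is_factor (lm g) (lm f)" using red f g ne by (auto simp: reduced_hom_pres_def)
  moreover have "is_factor (lm g) (lm f)" unfolding is_factor_def e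
    by (rule exI[of _ "[]"], rule exI[of _ "[]"]) simp
  ultimately show False by simp
qed

lemma R_nonlead: "f \<in> R \<Longrightarrow> u \<noteq> lm f \<Longrightarrow> f u \<noteq> 0 \<Longrightarrow> \<not> (\<exists>g\<in>R. lm g = u)"
proof
  assume f: "f \<in> R" and u: "u \<noteq> lm f" "f u \<noteq> 0" and "\<exists>g\<in>R. lm g = u"
  then obtain g where g: "g \<in> R" "lm g = u" by blast
  have "normal_form R u" using red f u by (auto simp: reduced_hom_pres_def)
  then have "\<not> is_factor (lm g) u" using g(1) by (simp add: normal_form_def)
  moreover have "is_factor (lm g) u" unfolding is_factor_def g(2)
    by (rule exI[of _ "[]"], rule exI[of _ "[]"]) simp
  ultimately show False by simp
qed

lemma R_other: "f \<in> R \<Longrightarrow> g \<in> R \<Longrightarrow> f (lm g) = (if f = g then 1 else 0)"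
proof -
  assume f: "f \<in> R" and g: "g \<in> R"
  show ?thesis
  proof (cases "f = g")
    case True then show ?thesis using R_lm[OF f] by simp
  next
    case False
    then have "lm g \<noteq> lm f" using R_inj[OF f g] by auto
    then have "f (lm g) = 0" using R_nonlead[OF f] g by blast
    then show ?thesis using False by simp
  qed
qed

lemma R_finite: "finite R"
proof -
  have "lm ` R \<subseteq> {w. length w = N}" using R_lm by auto
  then have "finite (lm ` R)" using finite_subset[OF _ finite_words] by blast
  moreover have "inj_on lm R" using R_inj by (auto simp: inj_on_def)
  ultimately show ?thesis using finite_imageD by blast
qed

abbreviation "SS \<equiv> S_op N R"

lemma S_lead: "f \<in> R \<Longrightarrow> SS (lm f) = (\<lambda>u. delta (lm f) u - f u)"
proof
  fix u assume f: "f \<in> R"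
  have lf: "length (lm f) = N" using R_lm[OF f] by simp
  have some: "(SOME g. g \<in> R \<and> lm g = lm f) = f"
  proof (rule some_equality)
    show "f \<in> R \<and> lm f = lm f" using f by simp
  next
    fix g assume "g \<in> R \<and> lm g = lm f"
    then show "g = f" using R_inj[OF f, of g] by auto
  qed
  show "SS (lm f) u = delta (lm f) u - f u"
  proof (cases "length u = N")
    case True then show ?thesis using f lf some by (auto simp: S_op_def)
  next
    case False
    then have "u \<noteq> lm f" "f u = 0" using lf R_Vm[OF f] by (auto simp: Vm_def)
    then show ?thesis using False by (simp add: S_op_def delta_def)
  qed
qed

lemma S_nonlead: "length w = N \<Longrightarrow> \<not> (\<exists>f\<in>R. lm f = w) \<Longrightarrow> SS w = delta w"
proof
  fix u assume lw: "length w = N" and nl: "\<not> (\<exists>f\<in>R. lm f = w)"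
  show "SS w u = delta w u"
  proof (cases "length u = N")
    case True then show ?thesis using lw nl by (simp add: S_op_def)
  next
    case False then have "u \<noteq> w" using lw by auto
    then show ?thesis using False by (simp add: S_op_def delta_def)
  qed
qed

lemma S_out: "length w \<noteq> N \<Longrightarrow> SS w = (\<lambda>_. 0)"
  by (auto simp: S_op_def)

lemma S_supp: "opsupp N SS"
  unfolding opsupp_def S_op_def by (auto split: if_splits)

lemma S_red: "red_op N SS"
  unfolding red_op_def
proof (intro conjI allI impI)
  fix w u assume "SS w u \<noteq> 0"
  then show "length w = N" "length u = N" using S_supp by (auto simp: opsupp_def)
next
  fix w :: "'x list" assume lw: "length w = N"
  show "SS w = delta w \<or> (\<forall>u. SS w u \<noteq> 0 \<longrightarrow> lexless u w)"
  proof (cases "\<exists>f\<in>R. lm f = w")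
    case False then show ?thesis using S_nonlead lw by simp
  next
    case True
    then obtain f where f: "f \<in> R" "lm f = w" by blast
    have "\<forall>u. SS w u \<noteq> 0 \<longrightarrow> lexless u w"
    proof (intro allI impI)
      fix u assume ne: "SS w u \<noteq> 0"
      then have "delta w u - f u \<noteq> 0" using S_lead[OF f(1)] f(2) by simp
      moreover have "f w = 1" using R_lm[OF f(1)] f(2) by simp
      ultimately have "u \<noteq> w" "f u \<noteq> 0" by (auto simp: delta_def split: if_splits)
      then have "u \<le> w" "length u = N" using R_lm[OF f(1)] f(2) R_Vm[OF f(1)] by (auto simp: Vm_def)
      then show "lexless u w" using \<open>u \<noteq> w\<close> lexless_iff[of u w] lw by auto
    qed
    then show ?thesis by simp
  qed
next
  show "comp N SS SS = SS"
  proof (intro ext)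
    fix w u
    show "comp N SS SS w u = SS w u"
    proof (cases "length w = N")
      case False then show ?thesis by (simp add: comp_def S_out)
    next
      case lw: True
      show ?thesis
      proof (cases "\<exists>f\<in>R. lm f = w")
        case False
        have "comp N SS SS w = apply_op N SS (SS w)" by (rule comp_row[OF lw])
        then have "comp N SS SS w = apply_op N SS (delta w)" using S_nonlead[OF lw False] by simp
        then show ?thesis using apply_op_delta[OF lw, of SS] by simp
      next
        case True
        then obtain f where f: "f \<in> R" "lm f = w" by blast
        have "comp N SS SS w u = (\<Sum>y\<in>{y. length y = N}. SS w y * delta y u)"
          unfolding comp_def
        proof (rule sum.cong)
          fix y assume y: "y \<in> {y::'x list. length y = N}"
          show "SS w y * SS y u = SS w y * delta y u"
          proof (cases "SS w y = 0")
            case False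
            then have "delta w y - f y \<noteq> 0" using S_lead[OF f(1)] f(2) by simp
            moreover have "f w = 1" using R_lm[OF f(1)] f(2) by simp
            ultimately have "y \<noteq> w" "f y \<noteq> 0" by (auto simp: delta_def split: if_splits)
            then have "\<not> (\<exists>g\<in>R. lm g = y)" using R_nonlead[OF f(1)] f(2) by blast
            then show ?thesis using S_nonlead y by simp
          qed simp
        qed simp
        also have "\<dots> = SS w u"
        proof -
          have "SS w \<in> Vm N" using apply_op_Vm[OF S_supp, of "delta w"] apply_op_delta[OF lw, of SS] by simp
          from fun_cong[OF vec_expand[OF this], of u] show ?thesis by simp
        qed
        finally show ?thesis .
      qed
    qed
  qed
qed

lemma R_ker: "f \<in> R \<Longrightarrow> f \<in> ker_op N SS"
proof -
  assume f: "f \<in> R"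
  have fV: "f \<in> Vm N" using R_Vm[OF f] .
  have lf: "length (lm f) = N" and f1: "f (lm f) = 1" using R_lm[OF f] by auto
  have "apply_op N SS f = (\<lambda>_. 0)"
  proof
    fix u
    have "apply_op N SS f u = (\<Sum>y\<in>{y. length y = N}. f y * delta y u - (if y = lm f then f u else 0))"
      unfolding apply_op_def
    proof (rule sum.cong)
      fix y assume y: "y \<in> {y::'x list. length y = N}"
      show "f y * SS y u = f y * delta y u - (if y = lm f then f u else 0)"
      proof (cases "y = lm f")
        case True then show ?thesis using S_lead[OF f] f1 by (simp add: right_diff_distrib)
      next
        case False
        show ?thesis
        proof (cases "f y = 0")
          case False
          then have "\<not> (\<exists>g\<in>R. lm g = y)" using R_nonlead[OF f] \<open>y \<noteq> lm f\<close> by blast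
          then show ?thesis using S_nonlead y \<open>y \<noteq> lm f\<close> by simp
        qed (use \<open>y \<noteq> lm f\<close> in simp)
      qed
    qed simp
    also have "\<dots> = f u - f u"
      using fun_cong[OF vec_expand[OF fV], of u] lf
      by (simp add: sum_subtractf sum.delta[OF finite_words])
    finally show "apply_op N SS f u = 0" by simp
  qed
  then show ?thesis using fV by (simp add: ker_op_def)
qed

lemma span_ker: "lin_span R \<subseteq> ker_op N SS"
proof
  fix v assume "v \<in> lin_span R"
  then obtain F c where F: "finite F" "F \<subseteq> R" "v = (\<lambda>u. \<Sum>f\<in>F. c f * f u)"
    by (auto simp: lin_span_def)
  have "(\<lambda>u. \<Sum>f\<in>F. c f * f u) \<in> ker_op N SS"
    by (rule subsp_lincomb[OF ker_subsp F(1)]) (use F(2) R_ker in blast)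
  then show "v \<in> ker_op N SS" using F(3) by simp
qed

lemma ker_span: "ker_op N SS \<subseteq> lin_span R"
proof
  fix v assume vk: "v \<in> ker_op N SS"
  define z where "z = (\<lambda>u. \<Sum>f\<in>R. v (lm f) * f u)"
  have zspan: "z \<in> lin_span R" unfolding lin_span_def z_def
    by (rule CollectI, rule exI[of _ R], rule exI[of _ "\<lambda>f. v (lm f)"]) (simp add: R_finite)
  have zk: "z \<in> ker_op N SS" unfolding z_def
    by (rule subsp_lincomb[OF ker_subsp R_finite]) (rule R_ker)
  define x where "x = (\<lambda>u. v u - z u)"
  have xk: "x \<in> ker_op N SS" unfolding x_def by (rule subsp_diff[OF ker_subsp vk zk])
  have xV: "x \<in> Vm N" using xk by (simp add: ker_op_def)
  have xlead: "\<And>g. g \<in> R \<Longrightarrow> x (lm g) = 0"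
  proof -
    fix g assume g: "g \<in> R"
    have "z (lm g) = (\<Sum>f\<in>R. v (lm f) * (if f = g then 1 else 0))"
      unfolding z_def by (rule sum.cong) (use g R_other in auto)
    also have "\<dots> = (\<Sum>f\<in>R. if f = g then v (lm g) else 0)"
      by (rule sum.cong) auto
    also have "\<dots> = v (lm g)" using g R_finite by (simp add: sum.delta)
    finally show "x (lm g) = 0" by (simp add: x_def)
  qed
  have "apply_op N SS x = x"
  proof
    fix u
    have "apply_op N SS x u = (\<Sum>y\<in>{y. length y = N}. x y * delta y u)"
      unfolding apply_op_def
    proof (rule sum.cong)
      fix y assume y: "y \<in> {y::'x list. length y = N}"
      show "x y * SS y u = x y * delta y u"
      proof (cases "x y = 0")
        case False
        then have "\<not> (\<exists>g\<in>R. lm g = y)" using xlead by blast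
        then show ?thesis using S_nonlead y by simp
      qed simp
    qed simp
    also have "\<dots> = x u" using fun_cong[OF vec_expand[OF xV], of u] by simp
    finally show "apply_op N SS x u = x u" .
  qed
  then have "x = (\<lambda>_. 0)" using xk by (simp add: ker_op_def)
  then have "\<And>u. v u = z u" unfolding x_def
  proof -
    fix u assume "(\<lambda>u. v u - z u) = (\<lambda>_. 0)"
    from fun_cong[OF this, of u] show "v u = z u" by simp
  qed
  then have "v = z" by (rule ext)
  then show "v \<in> lin_span R" using zspan by simp
qed

lemma ker_S: "ker_op N SS = lin_span R"
  using span_ker ker_span by blast

end




lemma LS_gen: "a \<in> A \<Longrightarrow> a \<in> lin_span A"
  unfolding lin_span_def
  by (rule CollectI, rule exI[of _ "{a}"], rule exI[of _ "\<lambda>_. 1"]) simp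

lemma LS_zero: "(\<lambda>_. 0) \<in> lin_span A"
  unfolding lin_span_def
  by (rule CollectI, rule exI[of _ "{}"], rule exI[of _ "\<lambda>_. 1"]) simp

lemma LS_add:
  assumes "a \<in> lin_span A" "b \<in> lin_span A"
  shows "(\<lambda>u. a u + b u) \<in> lin_span A"
proof -
  obtain F1 c1 where 1: "finite F1" "F1 \<subseteq> A" "a = (\<lambda>u. \<Sum>f\<in>F1. c1 f * f u)"
    using assms(1) by (auto simp: lin_span_def)
  obtain F2 c2 where 2: "finite F2" "F2 \<subseteq> A" "b = (\<lambda>u. \<Sum>f\<in>F2. c2 f * f u)"
    using assms(2) by (auto simp: lin_span_def)
  define c where "c = (\<lambda>f. (if f \<in> F1 then c1 f else 0) + (if f \<in> F2 then c2 f else 0))"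
  have fin: "finite (F1 \<union> F2)" using 1 2 by simp
  have "(\<lambda>u. a u + b u) = (\<lambda>u. \<Sum>f\<in>F1 \<union> F2. c f * f u)"
  proof
    fix u
    have "(\<Sum>f\<in>F1 \<union> F2. c f * f u)
        = (\<Sum>f\<in>F1 \<union> F2. (if f \<in> F1 then c1 f * f u else 0) + (if f \<in> F2 then c2 f * f u else 0))"
      by (rule sum.cong) (auto simp: c_def distrib_right)
    also have "\<dots> = (\<Sum>f\<in>F1 \<union> F2. if f \<in> F1 then c1 f * f u else 0) + (\<Sum>f\<in>F1 \<union> F2. if f \<in> F2 then c2 f * f u else 0)"
      by (rule sum.distrib)
    also have "\<dots> = (\<Sum>f\<in>F1. c1 f * f u) + (\<Sum>f\<in>F2. c2 f * f u)"
    proof -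
      have "(\<Sum>f\<in>F1 \<union> F2. if f \<in> F1 then c1 f * f u else 0) = (\<Sum>f\<in>(F1 \<union> F2) \<inter> F1. c1 f * f u)"
        by (rule sum.inter_restrict[OF fin, symmetric])
      moreover have "(\<Sum>f\<in>F1 \<union> F2. if f \<in> F2 then c2 f * f u else 0) = (\<Sum>f\<in>(F1 \<union> F2) \<inter> F2. c2 f * f u)"
        by (rule sum.inter_restrict[OF fin, symmetric])
      moreover have "(F1 \<union> F2) \<inter> F1 = F1" "(F1 \<union> F2) \<inter> F2 = F2" by auto
      ultimately show ?thesis by simp
    qed
    finally show "a u + b u = (\<Sum>f\<in>F1 \<union> F2. c f * f u)" using 1(3) 2(3) by simp
  qed
  then show ?thesis unfolding lin_span_def using fin 1(2) 2(2) by blast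
qed

lemma LS_sum:
  assumes "finite I" "\<And>i. i \<in> I \<Longrightarrow> h i \<in> lin_span A"
  shows "(\<lambda>u. \<Sum>i\<in>I. h i u) \<in> lin_span A"
  using assms
proof (induction I rule: finite_induct)
  case empty then show ?case using LS_zero by simp
next
  case (insert i I)
  have "(\<lambda>u. h i u + (\<lambda>u. \<Sum>i\<in>I. h i u) u) \<in> lin_span A"
    by (rule LS_add) (use insert in auto)
  then show ?case using insert by simp
qed

lemma LS_sub:
  assumes "subsp m W" "A \<subseteq> W"
  shows "lin_span A \<subseteq> W"
proof
  fix v assume "v \<in> lin_span A"
  then obtain F c where F: "finite F" "F \<subseteq> A" "v = (\<lambda>u. \<Sum>f\<in>F. c f * f u)"
    by (auto simp: lin_span_def)
  have "(\<lambda>u. \<Sum>f\<in>F. c f * f u) \<in> W"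
    by (rule subsp_lincomb[OF assms(1) F(1)]) (use F(2) assms(2) in blast)
  then show "v \<in> W" using F(3) by simp
qed

lemma tens_at:
  assumes "length p = a" "length s = b" "length p' = a" "length s' = b"
  shows "tens p w s (p' @ y @ s') = (if p' = p \<and> s' = s then w y else 0)"
  using assms by (auto simp: tens_def)

lemma tens_out:
  assumes "w \<in> Vm n" "length p = a" "length s = b" "length u \<noteq> a + n + b"
  shows "tens p w s u = 0"
proof (rule ccontr)
  assume ne: "tens p w s u \<noteq> 0"
  then have c: "a + b \<le> length u" using assms(2,3) by (auto simp: tens_def split: if_splits)
  then have "w (drop a (take (length u - b) u)) \<noteq> 0" using ne assms(2,3) by (auto simp: tens_def split: if_splits)
  moreover have "\<forall>u. w u \<noteq> 0 \<longrightarrow> length u = n" using assms(1) by (simp add: Vm_def)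
  ultimately have "length (drop a (take (length u - b) u)) = n" by blast
  then show False using c assms(4) by simp
qed

context
  fixes N :: nat and R :: "('x::{finite,linorder} list \<Rightarrow> 'k::field) set"
  assumes red: "reduced_hom_pres N R"
begin

lemma TS_ker:
  assumes M: "M = a + N + b"
  shows "tens_sub a (lin_span R) b \<subseteq> ker_op M (embed a N b (S_op N R))"
  unfolding tens_sub_def M
proof (rule LS_sub[OF ker_subsp], rule subsetI)
  fix g assume "g \<in> {tens p w s |p w s. length p = a \<and> w \<in> lin_span R \<and> length s = b}"
  then obtain p w s where g: "g = tens p w s" "length p = a" "w \<in> lin_span R" "length s = b" by blast
  have wk: "w \<in> ker_op N (S_op N R)" using g(3) ker_S[OF red] by simp
  then have wV: "w \<in> Vm N" by (simp add: ker_op_def)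
  have gV: "g \<in> Vm (a + N + b)"
    unfolding Vm_def using tens_out[OF wV g(2) g(4)] g(1) by auto
  show "g \<in> ker_op (a + N + b) (embed a N b (S_op N R))"
    unfolding ker_embed[OF S_supp[OF red] gV]
  proof (intro allI impI)
    fix p' s' :: "'x list" assume lp': "length p' = a" and ls': "length s' = b"
    have "sl N p' s' g = (if p' = p \<and> s' = s then w else (\<lambda>_. 0))"
    proof
      fix y show "sl N p' s' g y = (if p' = p \<and> s' = s then w else (\<lambda>_. 0)) y"
      proof (cases "length y = N")
        case True
        have "tens p w s (p' @ y @ s') = (if p' = p \<and> s' = s then w y else 0)"
          by (rule tens_at[OF g(2) g(4) lp' ls'])
        then show ?thesis using g(1) True by (simp add: sl_def)
      next
        case False then show ?thesis using wV by (auto simp: sl_def Vm_def)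
      qed
    qed
    then show "sl N p' s' g \<in> ker_op N (S_op N R)" using wk subsp_zero[OF ker_subsp[of N "S_op N R"]] by simp
  qed
qed

lemma KER_ts:
  assumes M: "M = a + N + b"
  shows "ker_op M (embed a N b (S_op N R)) \<subseteq> tens_sub a (lin_span R) b"
  unfolding M
proof
  fix v assume vk: "v \<in> ker_op (a + N + b) (embed a N b (S_op N R))"
  have vV: "v \<in> Vm (a + N + b)" using vk by (simp add: ker_op_def)
  have slk: "\<And>p s. length p = a \<Longrightarrow> length s = b \<Longrightarrow> sl N p s v \<in> lin_span R"
    using vk unfolding ker_embed[OF S_supp[OF red] vV] ker_S[OF red] by blast
  define I where "I = {p::'x list. length p = a} \<times> {s::'x list. length s = b}"
  have finI: "finite I" unfolding I_def using finite_words by blast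
  define h where "h = (\<lambda>q. tens (fst q) (sl N (fst q) (snd q) v) (snd q))"
  have v_eq: "v = (\<lambda>u. \<Sum>q\<in>I. h q u)"
  proof
    fix u
    show "v u = (\<Sum>q\<in>I. h q u)"
    proof (cases "length u = a + N + b")
      case True
      then obtain p0 y0 s0 where u: "u = p0 @ y0 @ s0" "length p0 = a" "length y0 = N" "length s0 = b"
        using split3 by blast
      have "(\<Sum>q\<in>I. h q u) = (\<Sum>q\<in>I. if q = (p0, s0) then v u else 0)"
      proof (rule sum.cong)
        fix q assume "q \<in> I"
        then have lq: "length (fst q) = a" "length (snd q) = b" by (auto simp: I_def)
        have t: "tens (fst q) (sl N (fst q) (snd q) v) (snd q) (p0 @ y0 @ s0)
            = (if p0 = fst q \<and> s0 = snd q then sl N (fst q) (snd q) v y0 else 0)"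
          by (rule tens_at[OF lq u(2) u(4)])
        show "h q u = (if q = (p0, s0) then v u else 0)"
        proof (cases "q = (p0, s0)")
          case True
          then have "h q u = tens p0 (sl N p0 s0 v) s0 (p0 @ y0 @ s0)" by (simp add: h_def u(1))
          also have "\<dots> = sl N p0 s0 v y0" using tens_at[OF u(2) u(4) u(2) u(4), of "sl N p0 s0 v" y0] by simp
          also have "\<dots> = v u" using u by (simp add: sl_def)
          finally show ?thesis using True by simp
        next
          case False
          then have "\<not> (p0 = fst q \<and> s0 = snd q)" by auto
          then show ?thesis using t u False by (auto simp: h_def)
        qed
      qed simp
      also have "\<dots> = v u" using finI u by (simp add: sum.delta' I_def)
      finally show ?thesis by simp
    next
      case False
      have "(\<Sum>q\<in>I. h q u) = 0"
      proof (rule sum.neutral, rule ballI)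
        fix q assume "q \<in> I"
        then have lq: "length (fst q) = a" "length (snd q) = b" by (auto simp: I_def)
        show "h q u = 0" unfolding h_def by (rule tens_out[OF sl_Vm lq False])
      qed
      moreover have "v u = 0" using vV False by (auto simp: Vm_def)
      ultimately show ?thesis by simp
    qed
  qed
  have "(\<lambda>u. \<Sum>q\<in>I. h q u) \<in> lin_span {tens p w s |p w s. length p = a \<and> w \<in> lin_span R \<and> length s = b}"
  proof (rule LS_sum[OF finI], rule LS_gen)
    fix q assume "q \<in> I"
    then have lq: "length (fst q) = a" "length (snd q) = b" by (auto simp: I_def)
    show "h q \<in> {tens p w s |p w s. length p = a \<and> w \<in> lin_span R \<and> length s = b}"
      unfolding h_def using lq slk[OF lq] by blast
  qed
  then show "v \<in> tens_sub a (lin_span R) b" unfolding tens_sub_def using v_eq by simp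
qed

lemma ts_eq: "M = a + N + b \<Longrightarrow> tens_sub a (lin_span R) b = ker_op M (embed a N b (S_op N R))"
  using TS_ker KER_ts by blast

lemma EC_ker:
  assumes ec: "extra_confluent N R" and n: "2 \<le> n" "n \<le> N - 1"
  shows "ker_op (N + n) (embed n N 0 (S_op N R)) \<inter> ker_op (N + n) (embed 0 N n (S_op N R))
       \<subseteq> ker_op (N + n) (embed (n - 1) N 1 (S_op N R))"
proof -
  have "tens_sub n (lin_span R) 0 \<inter> tens_sub 0 (lin_span R) n \<subseteq> tens_sub (n - 1) (lin_span R) 1"
    using ec n by (simp add: extra_confluent_def)
  moreover have "tens_sub n (lin_span R) 0 = ker_op (N + n) (embed n N 0 (S_op N R))"
    by (rule ts_eq) simp
  moreover have "tens_sub 0 (lin_span R) n = ker_op (N + n) (embed 0 N n (S_op N R))"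
    by (rule ts_eq) simp
  moreover have "tens_sub (n - 1) (lin_span R) 1 = ker_op (N + n) (embed (n - 1) N 1 (S_op N R))"
    by (rule ts_eq) (use n in simp)
  ultimately show ?thesis by simp
qed

end

lemma embed_embed':
  "n = c + N + d \<Longrightarrow> a' = a + c \<Longrightarrow> b' = d + b \<Longrightarrow> embed a n b (embed c N d S) = embed a' N b' S"
  using embed_embed by simp

lemma SC_lift:
  fixes R :: "('x::{finite,linorder} list \<Rightarrow> 'k::field) set"
  assumes sc: "side_confluent N R" and j: "1 \<le> j" "j \<le> N - 1" and m: "i + N + j \<le> m"
  shows "\<exists>k\<ge>1. braid m (Sm N R m (i + j)) (Sm N R m i) k = braid m (Sm N R m i) (Sm N R m (i + j)) k"
proof -
  obtain k where k: "k \<ge> 1" "braid (N + j) (embed j N 0 (S_op N R)) (embed 0 N j (S_op N R)) k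
          = braid (N + j) (embed 0 N j (S_op N R)) (embed j N 0 (S_op N R)) k"
    using sc j by (auto simp: side_confluent_def)
  define c where "c = m - N - j - i"
  have mc: "i + (N + j) + c = m" using m by (simp add: c_def)
  have e1: "embed i (N + j) c (embed j N 0 (S_op N R)) = Sm N R m (i + j)"
    unfolding Sm_def by (rule embed_embed') (use m in \<open>auto simp: c_def\<close>)
  have e2: "embed i (N + j) c (embed 0 N j (S_op N R)) = Sm N R m i"
    unfolding Sm_def by (rule embed_embed') (use m in \<open>auto simp: c_def\<close>)
  from arg_cong[OF k(2), of "embed i (N + j) c"]
  have "braid (i + (N + j) + c) (Sm N R m (i + j)) (Sm N R m i) k
      = braid (i + (N + j) + c) (Sm N R m i) (Sm N R m (i + j)) k"
    by (simp only: embed_braid e1 e2)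
  then show ?thesis using k(1) mc by auto
qed




function nf :: "nat \<Rightarrow> (nat \<Rightarrow> 'x::{finite,linorder} list \<Rightarrow> 'x list \<Rightarrow> 'k::field) \<Rightarrow> nat set \<Rightarrow> 'x list \<Rightarrow> 'x list \<Rightarrow> 'k" where
  "nf m T A w = (if length w = m \<and> (\<exists>i\<in>A. T i w \<noteq> delta w)
     then (\<lambda>u. \<Sum>y\<in>{y. length y = m \<and> y < w}. T (SOME i. i \<in> A \<and> T i w \<noteq> delta w) w y * nf m T A y u)
     else (if length w = m then delta w else (\<lambda>_. 0)))"
  by auto
termination
proof (relation "measure (\<lambda>(m, T, A, w). card {u. length u = m \<and> u < w})")
  show "wf (measure (\<lambda>(m, T, A, w). card {u. length u = m \<and> u < w}))" by simp
next
  fix m :: nat and T :: "nat \<Rightarrow> 'x::{finite,linorder} list \<Rightarrow> 'x list \<Rightarrow> 'k::field" and A w y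
  assume "length w = m \<and> (\<exists>i\<in>A. T i w \<noteq> delta w)" and y: "y \<in> {y. length y = m \<and> y < w}"
  have sub: "{v. length v = m \<and> v < y} \<subset> {v. length v = m \<and> v < w}" using y by auto
  have "finite {v::'x list. length v = m \<and> v < w}"
    by (rule finite_subset[OF _ finite_words[of m]]) auto
  then have "card {v. length v = m \<and> v < y} < card {v. length v = m \<and> v < w}"
    using psubset_card_mono[OF _ sub] by simp
  then show "((m, T, A, y), m, T, A, w) \<in> measure (\<lambda>(m, T, A, w). card {u. length u = m \<and> u < w})"
    by simp
qed

declare nf.simps[simp del]

definition KSZ :: "nat \<Rightarrow> (nat \<Rightarrow> 'x list \<Rightarrow> 'x list \<Rightarrow> 'k::field) \<Rightarrow> nat set \<Rightarrow> 'x list set \<Rightarrow> ('x list \<Rightarrow> 'k) set" where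
  "KSZ m T A Z = {v. \<exists>vs. (\<forall>i\<in>A. vs i \<in> ker_op m (T i) \<and> (\<forall>u. vs i u \<noteq> 0 \<longrightarrow> u \<in> Z)) \<and> v = (\<lambda>u. \<Sum>i\<in>A. vs i u)}"

lemma KSZ_I: "(\<And>i. i \<in> A \<Longrightarrow> vs i \<in> ker_op m (T i)) \<Longrightarrow> (\<And>i u. i \<in> A \<Longrightarrow> vs i u \<noteq> 0 \<Longrightarrow> u \<in> Z)
   \<Longrightarrow> (\<lambda>u. \<Sum>i\<in>A. vs i u) \<in> KSZ m T A Z"
  unfolding KSZ_def by blast

lemma KSZ_D: "v \<in> KSZ m T A Z \<Longrightarrow> \<exists>vs. (\<forall>i\<in>A. vs i \<in> ker_op m (T i)) \<and> (\<forall>i\<in>A. \<forall>u. vs i u \<noteq> 0 \<longrightarrow> u \<in> Z)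
   \<and> v = (\<lambda>u. \<Sum>i\<in>A. vs i u)"
  unfolding KSZ_def by blast

lemma KSZ_subsp:
  fixes T :: "nat \<Rightarrow> 'x list \<Rightarrow> 'x list \<Rightarrow> 'k::field"
  assumes finA: "finite A"
  shows "subsp m (KSZ m T A Z)"
  unfolding subsp_def
proof (intro conjI ballI allI subsetI)
  fix x assume xK: "x \<in> KSZ m T A Z"
  obtain vs where vs: "\<forall>i\<in>A. vs i \<in> ker_op m (T i) \<and> (\<forall>u. vs i u \<noteq> 0 \<longrightarrow> u \<in> Z)"
    "x = (\<lambda>u. \<Sum>i\<in>A. vs i u)"
    using xK unfolding KSZ_def by blast
  have "(\<lambda>u. \<Sum>i\<in>A. vs i u) \<in> Vm m"
    by (rule subsp_sum[OF Vm_subsp finA]) (use vs(1) in \<open>auto simp: ker_op_def\<close>)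
  then show "x \<in> Vm m" using vs(2) by simp
next
  have "(\<lambda>u. \<Sum>i\<in>A. (\<lambda>i u. 0) i u) \<in> KSZ m T A Z"
    by (rule KSZ_I) (auto intro: subsp_zero[OF ker_subsp])
  then show "(\<lambda>_. 0) \<in> KSZ m T A Z" by simp
next
  fix a b assume a: "a \<in> KSZ m T A Z" and b: "b \<in> KSZ m T A Z"
  obtain vs where vs: "\<forall>i\<in>A. vs i \<in> ker_op m (T i)" "\<forall>i\<in>A. \<forall>u. vs i u \<noteq> 0 \<longrightarrow> u \<in> Z"
    "a = (\<lambda>u. \<Sum>i\<in>A. vs i u)" using KSZ_D[OF a] by blast
  obtain ws where ws: "\<forall>i\<in>A. ws i \<in> ker_op m (T i)" "\<forall>i\<in>A. \<forall>u. ws i u \<noteq> 0 \<longrightarrow> u \<in> Z"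
    "b = (\<lambda>u. \<Sum>i\<in>A. ws i u)" using KSZ_D[OF b] by blast
  have "(\<lambda>u. \<Sum>i\<in>A. (\<lambda>i u. vs i u + ws i u) i u) \<in> KSZ m T A Z"
  proof (rule KSZ_I)
    fix i assume "i \<in> A"
    then show "(\<lambda>u. vs i u + ws i u) \<in> ker_op m (T i)" using subsp_add[OF ker_subsp] vs(1) ws(1) by blast
  next
    fix i u assume "i \<in> A" "vs i u + ws i u \<noteq> 0"
    then have "vs i u \<noteq> 0 \<or> ws i u \<noteq> 0" by auto
    then show "u \<in> Z" using vs(2) ws(2) \<open>i \<in> A\<close> by blast
  qed
  then show "(\<lambda>u. a u + b u) \<in> KSZ m T A Z" using vs(3) ws(3) by (simp add: sum.distrib)
next
  fix c a assume a: "a \<in> KSZ m T A Z"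
  obtain vs where vs: "\<forall>i\<in>A. vs i \<in> ker_op m (T i)" "\<forall>i\<in>A. \<forall>u. vs i u \<noteq> 0 \<longrightarrow> u \<in> Z"
    "a = (\<lambda>u. \<Sum>i\<in>A. vs i u)" using KSZ_D[OF a] by blast
  have "(\<lambda>u. \<Sum>i\<in>A. (\<lambda>i u. c * vs i u) i u) \<in> KSZ m T A Z"
  proof (rule KSZ_I)
    fix i assume "i \<in> A"
    then show "(\<lambda>u. c * vs i u) \<in> ker_op m (T i)" using subsp_smult[OF ker_subsp] vs(1) by blast
  next
    fix i u assume "i \<in> A" "c * vs i u \<noteq> 0"
    then have "vs i u \<noteq> 0" by auto
    then show "u \<in> Z" using vs(2) \<open>i \<in> A\<close> by blast
  qed
  then show "(\<lambda>u. c * a u) \<in> KSZ m T A Z" using vs(3) by (simp add: sum_distrib_left)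
qed

lemma KSZ_mono: "Z \<subseteq> Z' \<Longrightarrow> KSZ m T A Z \<subseteq> KSZ m T A Z'"
  unfolding KSZ_def by blast

lemma ker_in_KSZ:
  fixes T :: "nat \<Rightarrow> 'x list \<Rightarrow> 'x list \<Rightarrow> 'k::field"
  assumes finA: "finite A" and j: "j \<in> A" and v: "v \<in> ker_op m (T j)" and Z: "\<And>u. v u \<noteq> 0 \<Longrightarrow> u \<in> Z"
  shows "v \<in> KSZ m T A Z"
proof -
  define vs where "vs = (\<lambda>i. if i = j then v else (\<lambda>_. 0))"
  have "(\<lambda>u. \<Sum>i\<in>A. vs i u) \<in> KSZ m T A Z"
  proof (rule KSZ_I)
    fix i assume "i \<in> A" then show "vs i \<in> ker_op m (T i)"
      using v subsp_zero[OF ker_subsp[of m "T i"]] by (simp add: vs_def)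
  next
    fix i u assume "i \<in> A" "vs i u \<noteq> 0" then show "u \<in> Z" using Z by (auto simp: vs_def split: if_splits)
  qed
  moreover have "(\<lambda>u. \<Sum>i\<in>A. vs i u) = v"
  proof
    fix u
    have "(\<Sum>i\<in>A. vs i u) = (\<Sum>i\<in>A. if i = j then v u else 0)" by (rule sum.cong) (auto simp: vs_def)
    also have "\<dots> = v u" using finA j by (simp add: sum.delta')
    finally show "(\<Sum>i\<in>A. vs i u) = v u" by simp
  qed
  ultimately show ?thesis by simp
qed

lemma apply_idop:
  fixes v :: "'x::finite list \<Rightarrow> 'k::field"
  shows "v \<in> Vm m \<Longrightarrow> apply_op m (idop m) v = v"
proof -
  assume v: "v \<in> Vm m"
  have "apply_op m (idop m) v = (\<lambda>u. \<Sum>w\<in>{w. length w = m}. v w * delta w u)"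
    unfolding apply_op_def by (rule ext, rule sum.cong) (auto simp: idop_def delta_def)
  also have "\<dots> = v" using vec_expand[OF v] by simp
  finally show ?thesis .
qed

locale diamond =
  fixes m :: nat and T :: "nat \<Rightarrow> 'x::{finite,linorder} list \<Rightarrow> 'x list \<Rightarrow> 'k::field" and A :: "nat set"
  assumes finA: "finite A"
    and redT: "\<And>i. i \<in> A \<Longrightarrow> red_op m (T i)"
    and braidT: "\<And>i j. i \<in> A \<Longrightarrow> j \<in> A \<Longrightarrow> \<exists>k\<ge>1. braid m (T i) (T j) k = braid m (T j) (T i) k"
begin

abbreviation "NF \<equiv> nf m T A"

lemma Trow_below: "i \<in> A \<Longrightarrow> length w = m \<Longrightarrow> T i w \<noteq> delta w \<Longrightarrow> Bs m w (T i w)"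
proof -
  assume i: "i \<in> A" and lw: "length w = m" and r: "T i w \<noteq> delta w"
  have "\<forall>u. T i w u \<noteq> 0 \<longrightarrow> u < w" using red_op_row[OF redT[OF i] lw] r by simp
  moreover have "T i w \<in> Vm m" using red_op_supp[OF redT[OF i]] by (auto simp: opsupp_def Vm_def)
  ultimately show ?thesis by (simp add: Bs_def)
qed

lemma nf_irred: "length w = m \<Longrightarrow> \<forall>i\<in>A. T i w = delta w \<Longrightarrow> NF w = delta w"
  by (subst nf.simps) simp

lemma nf_out: "length w \<noteq> m \<Longrightarrow> NF w = (\<lambda>_. 0)"
  by (subst nf.simps) simp

definition ch :: "'x list \<Rightarrow> nat" where "ch w = (SOME i. i \<in> A \<and> T i w \<noteq> delta w)"

lemma ch: "\<exists>i\<in>A. T i w \<noteq> delta w \<Longrightarrow> ch w \<in> A \<and> T (ch w) w \<noteq> delta w"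
  unfolding ch_def by (rule someI_ex) blast

lemma nf_red: assumes lw: "length w = m" and r: "\<exists>i\<in>A. T i w \<noteq> delta w"
  shows "NF w = apply_op m NF (T (ch w) w)"
proof
  fix u
  have "NF w u = (\<Sum>y\<in>{y. length y = m \<and> y < w}. T (ch w) w y * NF y u)"
    by (subst nf.simps) (simp add: lw r ch_def)
  also have "\<dots> = (\<Sum>y\<in>{y. length y = m}. T (ch w) w y * NF y u)"
  proof (rule sum.mono_neutral_left[OF finite_words])
    show "{y. length y = m \<and> y < w} \<subseteq> {y. length y = m}" by auto
  next
    have "Bs m w (T (ch w) w)" using Trow_below ch[OF r] lw by blast
    then show "\<forall>y\<in>{y. length y = m} - {y. length y = m \<and> y < w}. T (ch w) w y * NF y u = 0"
      by (auto simp: Bs_def)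
  qed
  finally show "NF w u = apply_op m NF (T (ch w) w) u" by (simp add: apply_op_def)
qed

lemma nf_Bl: assumes lw0: "length w = m" shows "Bl m w (NF w)"
  using lw0
proof (induction w rule: word_induct[of _ m])
  case (2 w)
  show ?case
  proof (cases "\<exists>i\<in>A. T i w \<noteq> delta w")
    case False then show ?thesis using nf_irred[OF 2(1)] 2(1) delta_Vm[OF 2(1)]
      by (auto simp: Bl_def delta_def)
  next
    case True
    have e: "NF w = apply_op m NF (T (ch w) w)" by (rule nf_red[OF 2(1) True])
    have Tb: "Bs m w (T (ch w) w)" using Trow_below ch[OF True] 2(1) by blast
    show ?thesis unfolding Bl_def
    proof (intro conjI allI impI)
      show "NF w \<in> Vm m" unfolding Vm_def
      proof (intro CollectI allI impI)
        fix u assume "NF w u \<noteq> 0"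
        then obtain y where "T (ch w) w y * NF y u \<noteq> 0" unfolding e apply_op_def
          by (meson sum.not_neutral_contains_not_neutral)
        then have "T (ch w) w y \<noteq> 0" "NF y u \<noteq> 0" by auto
        then have "length y = m" "y < w" using Tb by (auto simp: Bs_def Vm_def)
        then show "length u = m" using 2(2) \<open>NF y u \<noteq> 0\<close> by (auto simp: Bl_def Vm_def)
      qed
    next
      fix u assume "NF w u \<noteq> 0"
      then obtain y where "T (ch w) w y * NF y u \<noteq> 0" unfolding e apply_op_def
        by (meson sum.not_neutral_contains_not_neutral)
      then have "T (ch w) w y \<noteq> 0" "NF y u \<noteq> 0" by auto
      then have "length y = m" "y < w" using Tb by (auto simp: Bs_def Vm_def)
      then have "u \<le> y" using 2(2) \<open>NF y u \<noteq> 0\<close> by (auto simp: Bl_def)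
      then show "u \<le> w" using \<open>y < w\<close> by simp
    qed
  qed
qed (rule lw0)

lemma nf_supp: "opsupp m NF"
  unfolding opsupp_def
proof (intro allI impI)
  fix w u assume ne: "NF w u \<noteq> 0"
  then have lw: "length w = m" using nf_out by fastforce
  then show "length w = m \<and> length u = m" using nf_Bl[OF lw] ne by (auto simp: Bl_def Vm_def)
qed

lemma T_pres_Bs: "l \<in> A \<Longrightarrow> Bs m w v \<Longrightarrow> Bs m w (apply_op m (T l) v)"
proof -
  assume l: "l \<in> A" and v: "Bs m w v"
  show "Bs m w (apply_op m (T l) v)" unfolding Bs_def
  proof (intro conjI allI impI)
    show "apply_op m (T l) v \<in> Vm m" by (rule apply_op_Vm[OF red_op_supp[OF redT[OF l]]])
  next
    fix u assume "apply_op m (T l) v u \<noteq> 0"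
    then obtain y where "v y * T l y u \<noteq> 0" unfolding apply_op_def
      by (meson sum.not_neutral_contains_not_neutral)
    then have vy: "v y \<noteq> 0" and Tyu: "T l y u \<noteq> 0" by auto
    then have yw: "y < w" and ly: "length y = m" using v by (auto simp: Bs_def Vm_def)
    have "T l y = delta y \<or> (\<forall>u. T l y u \<noteq> 0 \<longrightarrow> u < y)" by (rule red_op_row[OF redT[OF l] ly])
    then have "u = y \<or> u < y" using Tyu by (auto simp: delta_def split: if_splits)
    then show "u < w" using yw by auto
  qed
qed

lemma apply_nf_T:
  assumes IH: "\<And>y l. length y = m \<Longrightarrow> y < w \<Longrightarrow> l \<in> A \<Longrightarrow> apply_op m NF (T l y) = NF y"
    and l: "l \<in> A" and v: "Bs m w v"
  shows "apply_op m NF (apply_op m (T l) v) = apply_op m NF v"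
proof
  fix u
  have "apply_op m NF (apply_op m (T l) v) u = apply_op m (comp m NF (T l)) v u"
    by (simp add: apply_op_comp)
  also have "\<dots> = apply_op m NF v u"
    unfolding apply_op_def
  proof (rule sum.cong)
    fix y assume y: "y \<in> {y::'x list. length y = m}"
    show "v y * comp m NF (T l) y u = v y * NF y u"
    proof (cases "v y = 0")
      case False
      then have "y < w" using v by (auto simp: Bs_def)
      then have "comp m NF (T l) y = NF y" using IH[OF _ _ l] y comp_row[of y m NF "T l"] by simp
      then show ?thesis by simp
    qed simp
  qed simp
  finally show "apply_op m NF (apply_op m (T l) v) u = apply_op m NF v u" .
qed

lemma apply_nf_braid:
  assumes IH: "\<And>y l. length y = m \<Longrightarrow> y < w \<Longrightarrow> l \<in> A \<Longrightarrow> apply_op m NF (T l y) = NF y"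
  shows "i \<in> A \<Longrightarrow> j \<in> A \<Longrightarrow> Bs m w v \<Longrightarrow> apply_op m NF (apply_op m (braid m (T i) (T j) k) v) = apply_op m NF v"
proof (induction k arbitrary: i j v)
  case 0
  then have "v \<in> Vm m" by (simp add: Bs_def)
  then show ?case by (simp add: apply_idop)
next
  case (Suc k)
  have "apply_op m (braid m (T i) (T j) (Suc k)) v = apply_op m (braid m (T j) (T i) k) (apply_op m (T j) v)"
    by (simp add: apply_op_comp)
  moreover have "Bs m w (apply_op m (T j) v)" by (rule T_pres_Bs[OF Suc.prems(2,3)])
  ultimately have "apply_op m NF (apply_op m (braid m (T i) (T j) (Suc k)) v) = apply_op m NF (apply_op m (T j) v)"
    using Suc.IH[OF Suc.prems(2) Suc.prems(1)] by simp
  also have "\<dots> = apply_op m NF v" by (rule apply_nf_T[OF IH Suc.prems(2,3)])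
  finally show ?case .
qed

lemma nf_T_all: assumes lw0: "length w = m" shows "\<forall>i\<in>A. apply_op m NF (T i w) = NF w"
  using lw0
proof (induction w rule: word_induct[of _ m])
  case (2 w)
  have IH: "\<And>y l. length y = m \<Longrightarrow> y < w \<Longrightarrow> l \<in> A \<Longrightarrow> apply_op m NF (T l y) = NF y"
    using 2(2) by blast
  show ?case
  proof (intro ballI)
  fix i assume iA: "i \<in> A"
  show "apply_op m NF (T i w) = NF w"
  proof (cases "T i w = delta w")
    case True then show ?thesis using apply_op_delta[OF 2(1), of NF] by simp
  next
    case ri: False
    then have r: "\<exists>i\<in>A. T i w \<noteq> delta w" using iA by blast
    define j where "j = ch w"
    have j: "j \<in> A" "T j w \<noteq> delta w" using ch[OF r] j_def by auto
    obtain k where k: "k \<ge> 1" "braid m (T i) (T j) k = braid m (T j) (T i) k"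
      using braidT[OF iA j(1)] by blast
    obtain k' where k': "k = Suc k'" using k(1) by (cases k) auto
    have Bi: "Bs m w (T i w)" by (rule Trow_below[OF iA 2(1) ri])
    have Bj: "Bs m w (T j w)" by (rule Trow_below[OF j(1) 2(1) j(2)])
    have "apply_op m NF (braid m (T i) (T j) k w) = apply_op m NF (apply_op m (braid m (T j) (T i) k') (T j w))"
      using comp_row[OF 2(1), of "braid m (T j) (T i) k'" "T j"] k' by simp
    also have "\<dots> = apply_op m NF (T j w)" by (rule apply_nf_braid[OF IH j(1) iA Bj])
    finally have e1: "apply_op m NF (braid m (T i) (T j) k w) = apply_op m NF (T j w)" .
    have "apply_op m NF (braid m (T j) (T i) k w) = apply_op m NF (apply_op m (braid m (T i) (T j) k') (T i w))"
      using comp_row[OF 2(1), of "braid m (T i) (T j) k'" "T i"] k' by simp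
    also have "\<dots> = apply_op m NF (T i w)" by (rule apply_nf_braid[OF IH iA j(1) Bi])
    finally have e2: "apply_op m NF (braid m (T j) (T i) k w) = apply_op m NF (T i w)" .
    have "NF w = apply_op m NF (T j w)" using nf_red[OF 2(1) r] j_def by simp
    then show ?thesis using e1 e2 k(2) by simp
  qed
  qed
qed (rule lw0)

lemma nf_T: "length w = m \<Longrightarrow> i \<in> A \<Longrightarrow> apply_op m NF (T i w) = NF w"
  using nf_T_all by blast

lemma comp_nf_T: "i \<in> A \<Longrightarrow> comp m NF (T i) = NF"
proof (intro ext)
  fix w u assume i: "i \<in> A"
  show "comp m NF (T i) w u = NF w u"
  proof (cases "length w = m")
    case True then show ?thesis using comp_row[OF True, of NF "T i"] nf_T[OF True i] by simp
  next
    case False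
    have "comp m NF (T i) w u = 0" unfolding comp_def
    proof (rule sum.neutral, rule ballI)
      fix y
      have "T i w y = 0" using red_op_supp[OF redT[OF i]] False by (auto simp: opsupp_def)
      then show "T i w y * NF y u = 0" by simp
    qed
    then show ?thesis using nf_out[OF False] by simp
  qed
qed

lemma nf_kills: "i \<in> A \<Longrightarrow> v \<in> ker_op m (T i) \<Longrightarrow> apply_op m NF v = (\<lambda>_. 0)"
proof -
  assume i: "i \<in> A" and v: "v \<in> ker_op m (T i)"
  have "apply_op m NF v = apply_op m (comp m NF (T i)) v" using comp_nf_T[OF i] by simp
  also have "\<dots> = apply_op m NF (apply_op m (T i) v)" by (rule apply_op_comp)
  also have "\<dots> = (\<lambda>_. 0)" using v by (simp add: ker_op_def apply_op_zero)
  finally show ?thesis .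
qed

lemma nf_kills_sum: "v \<in> KSZ m T A Z \<Longrightarrow> apply_op m NF v = (\<lambda>_. 0)"
proof -
  assume "v \<in> KSZ m T A Z"
  then obtain vs where vs: "\<forall>i\<in>A. vs i \<in> ker_op m (T i)" "\<forall>i\<in>A. \<forall>u. vs i u \<noteq> 0 \<longrightarrow> u \<in> Z"
    "v = (\<lambda>u. \<Sum>i\<in>A. vs i u)"
    using KSZ_D by blast
  have "apply_op m NF v = (\<lambda>u. \<Sum>i\<in>A. 1 * apply_op m NF (vs i) u)"
    using apply_op_lincomb[OF finA, of m NF "\<lambda>_. 1" vs] vs(3) by simp
  also have "\<dots> = (\<lambda>_. 0)"
  proof
    fix u
    have "\<And>i. i \<in> A \<Longrightarrow> apply_op m NF (vs i) = (\<lambda>_. 0)" using nf_kills vs(1) by blast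
    then show "(\<Sum>i\<in>A. 1 * apply_op m NF (vs i) u) = 0" by simp
  qed
  finally show ?thesis .
qed

lemma nf_word_decomp: assumes lw0: "length w = m" shows "(\<lambda>u. delta w u - NF w u) \<in> KSZ m T A {u. u \<le> w}"
  using lw0
proof (induction w rule: word_induct[of _ m])
  case (2 w)
  show ?case
  proof (cases "\<exists>i\<in>A. T i w \<noteq> delta w")
    case False
    then show ?thesis using nf_irred[OF 2(1)] subsp_zero[OF KSZ_subsp[OF finA]] by simp
  next
    case True
    define j where "j = ch w"
    have j: "j \<in> A" "T j w \<noteq> delta w" using ch[OF True] j_def by auto
    have Bj: "Bs m w (T j w)" by (rule Trow_below[OF j(1) 2(1) j(2)])
    have S: "subsp m (KSZ m T A {u. u \<le> w})" by (rule KSZ_subsp[OF finA])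
    have a: "(\<lambda>u. delta w u - T j w u) \<in> KSZ m T A {u. u \<le> w}"
    proof (rule ker_in_KSZ[OF finA j(1)])
      have "apply_op m (T j) (\<lambda>u. delta w u - T j w u) = (\<lambda>u. T j w u - comp m (T j) (T j) w u)"
        using apply_op_diff[of m "T j" "delta w" "T j w"] apply_op_delta[OF 2(1), of "T j"] comp_row[OF 2(1), of "T j" "T j"]
        by simp
      also have "\<dots> = (\<lambda>_. 0)" using red_op_idem[OF redT[OF j(1)]] by simp
      finally have ap: "apply_op m (T j) (\<lambda>u. delta w u - T j w u) = (\<lambda>_. 0)" .
      have "(\<lambda>u. delta w u - T j w u) \<in> Vm m"
        using subsp_diff[OF Vm_subsp delta_Vm[OF 2(1)]] Bj by (auto simp: Bs_def)
      then show "(\<lambda>u. delta w u - T j w u) \<in> ker_op m (T j)" using ap by (simp add: ker_op_def)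
    next
      fix u assume "delta w u - T j w u \<noteq> 0"
      then have "u = w \<or> T j w u \<noteq> 0" by (auto simp: delta_def split: if_splits)
      then show "u \<in> {u. u \<le> w}" using Bj by (auto simp: Bs_def)
    qed
    define f where "f = (\<lambda>y. if length y = m \<and> y < w then (\<lambda>u. delta y u - NF y u) else (\<lambda>_. 0))"
    have b: "(\<lambda>u. \<Sum>y\<in>{y. length y = m}. T j w y * f y u) \<in> KSZ m T A {u. u \<le> w}"
    proof (rule subsp_lincomb[OF S finite_words])
      fix y :: "'x list" assume "y \<in> {y. length y = m}"
      show "f y \<in> KSZ m T A {u. u \<le> w}"
      proof (cases "y < w")
        case True
        have "f y \<in> KSZ m T A {u. u \<le> y}" using 2(2)[of y] True \<open>y \<in> _\<close> by (simp add: f_def)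
        moreover have "KSZ m T A {u. u \<le> y} \<subseteq> KSZ m T A {u. u \<le> w}"
          by (rule KSZ_mono) (use True in auto)
        ultimately show ?thesis by blast
      next
        case False then show ?thesis using subsp_zero[OF S] by (simp add: f_def)
      qed
    qed
    have eq: "(\<lambda>u. delta w u - NF w u) = (\<lambda>u. (delta w u - T j w u) + (\<Sum>y\<in>{y. length y = m}. T j w y * f y u))"
    proof
      fix u
      have "(\<Sum>y\<in>{y. length y = m}. T j w y * f y u) = (\<Sum>y\<in>{y. length y = m}. T j w y * (delta y u - NF y u))"
      proof (rule sum.cong)
        fix y assume "y \<in> {y::'x list. length y = m}"
        show "T j w y * f y u = T j w y * (delta y u - NF y u)"
          using Bj \<open>y \<in> _\<close> by (cases "T j w y = 0") (auto simp: f_def Bs_def)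
      qed simp
      also have "\<dots> = T j w u - apply_op m NF (T j w) u"
        using fun_cong[OF vec_expand[of "T j w" m], of u] Bj
        by (simp add: Bs_def apply_op_def right_diff_distrib sum_subtractf)
      also have "\<dots> = T j w u - NF w u" using nf_red[OF 2(1) True] j_def by simp
      finally show "delta w u - NF w u = (delta w u - T j w u) + (\<Sum>y\<in>{y. length y = m}. T j w y * f y u)"
        by simp
    qed
    show ?thesis unfolding eq by (rule subsp_add[OF S a b])
  qed
qed (rule lw0)

lemma nf_decomp:
  assumes v: "v \<in> Vm m" and Zv: "\<And>u. v u \<noteq> 0 \<Longrightarrow> u \<in> Z" and Zd: "\<And>u u'. u \<in> Z \<Longrightarrow> u' \<le> u \<Longrightarrow> u' \<in> Z"
  shows "(\<lambda>u. v u - apply_op m NF v u) \<in> KSZ m T A Z"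
proof -
  have S: "subsp m (KSZ m T A Z)" by (rule KSZ_subsp[OF finA])
  define f where "f = (\<lambda>y. if y \<in> Z then (\<lambda>u. delta y u - NF y u) else (\<lambda>_. 0))"
  have "(\<lambda>u. \<Sum>y\<in>{y. length y = m}. v y * f y u) \<in> KSZ m T A Z"
  proof (rule subsp_lincomb[OF S finite_words])
    fix y :: "'x list" assume y: "y \<in> {y. length y = m}"
    show "f y \<in> KSZ m T A Z"
    proof (cases "y \<in> Z")
      case True
      have "KSZ m T A {u. u \<le> y} \<subseteq> KSZ m T A Z" by (rule KSZ_mono) (use Zd True in auto)
      then show ?thesis using nf_word_decomp[of y] y True by (auto simp: f_def)
    next
      case False then show ?thesis using subsp_zero[OF S] by (simp add: f_def)
    qed
  qed
  moreover have "(\<lambda>u. \<Sum>y\<in>{y. length y = m}. v y * f y u) = (\<lambda>u. v u - apply_op m NF v u)"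
  proof
    fix u
    have "(\<Sum>y\<in>{y. length y = m}. v y * f y u) = (\<Sum>y\<in>{y. length y = m}. v y * (delta y u - NF y u))"
      by (rule sum.cong) (use Zv in \<open>auto simp: f_def\<close>)
    also have "\<dots> = v u - apply_op m NF v u"
      using fun_cong[OF vec_expand[OF v], of u]
      by (simp add: apply_op_def right_diff_distrib sum_subtractf)
    finally show "(\<Sum>y\<in>{y. length y = m}. v y * f y u) = v u - apply_op m NF v u" .
  qed
  ultimately show ?thesis by simp
qed

lemma conf_lead:
  assumes x: "x \<in> KSZ m T A UNIV" and lw: "length w = m" and B: "Bl m w x" and xw: "x w \<noteq> 0"
  shows "\<exists>i\<in>A. T i w \<noteq> delta w"
proof -
  have "apply_op m NF x = (\<lambda>_. 0)" by (rule nf_kills_sum[OF x])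
  moreover have "(\<lambda>u. x u - apply_op m NF x u) \<in> KSZ m T A {u. u \<le> w}"
    by (rule nf_decomp) (use B in \<open>auto simp: Bl_def\<close>)
  ultimately have "x \<in> KSZ m T A {u. u \<le> w}" by simp
  then obtain vs where vs: "\<forall>i\<in>A. vs i \<in> ker_op m (T i)" "\<forall>i\<in>A. \<forall>u. vs i u \<noteq> 0 \<longrightarrow> u \<in> {u. u \<le> w}"
    "x = (\<lambda>u. \<Sum>i\<in>A. vs i u)" using KSZ_D by blast
  have "(\<Sum>i\<in>A. vs i w) \<noteq> 0" using xw vs(3) by simp
  then obtain i where i: "i \<in> A" "vs i w \<noteq> 0" by (meson sum.not_neutral_contains_not_neutral)
  have vk: "vs i \<in> ker_op m (T i)" using vs(1) i(1) by blast
  have "Bl m w (vs i)" using vk vs(2) i(1) by (auto simp: Bl_def ker_op_def)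
  from lead_reducible[OF redT[OF i(1)] lw vk this i(2)] i(1) show ?thesis by blast
qed

lemma conf_below:
  assumes x: "x \<in> KSZ m T A UNIV" and B: "Bs m w x"
  shows "x \<in> KSZ m T A {u. u < w}"
proof -
  have "apply_op m NF x = (\<lambda>_. 0)" by (rule nf_kills_sum[OF x])
  moreover have "(\<lambda>u. x u - apply_op m NF x u) \<in> KSZ m T A {u. u < w}"
    by (rule nf_decomp) (use B in \<open>auto simp: Bs_def\<close>)
  ultimately show ?thesis by simp
qed

end




lemma opsupp_embed: "M = a + n + b \<Longrightarrow> opsupp M (embed a n b T)"
  unfolding opsupp_def using embed_zero by blast

lemma red_row_ker:
  fixes T :: "'x::{finite,linorder} list \<Rightarrow> 'x list \<Rightarrow> 'k::field"
  assumes T: "red_op m T" and lw: "length w = m"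
  shows "(\<lambda>u. delta w u - T w u) \<in> ker_op m T"
proof -
  have "apply_op m T (\<lambda>u. delta w u - T w u) = (\<lambda>u. T w u - comp m T T w u)"
    using apply_op_diff[of m T "delta w" "T w"] apply_op_delta[OF lw, of T] comp_row[OF lw, of T T]
    by simp
  also have "\<dots> = (\<lambda>_. 0)" using red_op_idem[OF T] by simp
  finally have ap: "apply_op m T (\<lambda>u. delta w u - T w u) = (\<lambda>_. 0)" .
  have Tw: "T w \<in> Vm m" using apply_op_Vm[OF red_op_supp[OF T], of "delta w"] apply_op_delta[OF lw, of T] by simp
  have "(\<lambda>u. delta w u - T w u) \<in> Vm m" using subsp_diff[OF Vm_subsp delta_Vm[OF lw] Tw] .
  then show ?thesis using ap by (simp add: ker_op_def)
qed

lemma KSZ_insert: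
  fixes T :: "nat \<Rightarrow> 'x list \<Rightarrow> 'x list \<Rightarrow> 'k::field"
  assumes finA: "finite A" and j: "j \<notin> A"
  shows "msum (KSZ m T A UNIV) (ker_op m (T j)) = KSZ m T (insert j A) UNIV"
proof
  show "msum (KSZ m T A UNIV) (ker_op m (T j)) \<subseteq> KSZ m T (insert j A) UNIV"
  proof
    fix v assume "v \<in> msum (KSZ m T A UNIV) (ker_op m (T j))"
    then obtain a b where ab: "a \<in> KSZ m T A UNIV" "b \<in> ker_op m (T j)" "v = (\<lambda>u. a u + b u)"
      unfolding msum_def by blast
    obtain vs where vs: "\<forall>i\<in>A. vs i \<in> ker_op m (T i)" "a = (\<lambda>u. \<Sum>i\<in>A. vs i u)"
      using KSZ_D[OF ab(1)] by blast
    define vs' where "vs' = vs(j := b)"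
    have "(\<lambda>u. \<Sum>i\<in>insert j A. vs' i u) \<in> KSZ m T (insert j A) UNIV"
      by (rule KSZ_I) (use vs(1) ab(2) in \<open>auto simp: vs'_def\<close>)
    moreover have "(\<lambda>u. \<Sum>i\<in>insert j A. vs' i u) = v"
    proof
      fix u
      have "(\<Sum>i\<in>insert j A. vs' i u) = b u + (\<Sum>i\<in>A. vs' i u)"
        using finA j by (simp add: vs'_def)
      also have "(\<Sum>i\<in>A. vs' i u) = (\<Sum>i\<in>A. vs i u)"
        by (rule sum.cong) (use j in \<open>auto simp: vs'_def\<close>)
      finally show "(\<Sum>i\<in>insert j A. vs' i u) = v u" using ab(3) vs(2) by simp
    qed
    ultimately show "v \<in> KSZ m T (insert j A) UNIV" by simp
  qed
next
  show "KSZ m T (insert j A) UNIV \<subseteq> msum (KSZ m T A UNIV) (ker_op m (T j))"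
  proof
    fix v assume "v \<in> KSZ m T (insert j A) UNIV"
    then obtain vs where vs: "\<forall>i\<in>insert j A. vs i \<in> ker_op m (T i)" "v = (\<lambda>u. \<Sum>i\<in>insert j A. vs i u)"
      using KSZ_D by blast
    have a: "(\<lambda>u. \<Sum>i\<in>A. vs i u) \<in> KSZ m T A UNIV"
      by (rule KSZ_I) (use vs(1) in auto)
    have b: "vs j \<in> ker_op m (T j)" using vs(1) by simp
    have "(\<lambda>u. (\<lambda>u. \<Sum>i\<in>A. vs i u) u + vs j u) \<in> msum (KSZ m T A UNIV) (ker_op m (T j))"
      by (rule msum_I[OF a b])
    moreover have "(\<lambda>u. (\<lambda>u. \<Sum>i\<in>A. vs i u) u + vs j u) = v"
      using vs(2) finA j by (auto simp: add.commute intro!: ext)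
    ultimately show "v \<in> msum (KSZ m T A UNIV) (ker_op m (T j))" by simp
  qed
qed

lemma KSZ_single:
  fixes T :: "nat \<Rightarrow> 'x list \<Rightarrow> 'x list \<Rightarrow> 'k::field"
  shows "KSZ m T {r} UNIV = ker_op m (T r)"
proof
  show "KSZ m T {r} UNIV \<subseteq> ker_op m (T r)"
  proof
    fix v assume "v \<in> KSZ m T {r} UNIV"
    then obtain vs where vs: "\<forall>i\<in>{r}. vs i \<in> ker_op m (T i)" "v = (\<lambda>u. \<Sum>i\<in>{r}. vs i u)"
      using KSZ_D by blast
    then show "v \<in> ker_op m (T r)" by simp
  qed
next
  show "ker_op m (T r) \<subseteq> KSZ m T {r} UNIV"
    using ker_in_KSZ[of "{r}" r] by blast
qed

lemma ker_foldl_wedge: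
  fixes T :: "nat \<Rightarrow> 'x::{finite,linorder} list \<Rightarrow> 'x list \<Rightarrow> 'k::field"
  shows "ker_op m (foldl (wedge m) (T r) (map T [Suc r..<Suc r + j])) = KSZ m T {r..<Suc r + j} UNIV"
proof (induction j)
  case 0 then show ?case using KSZ_single[of m T r] by simp
next
  case (Suc j)
  have e: "[Suc r..<Suc r + Suc j] = [Suc r..<Suc r + j] @ [Suc r + j]" by simp
  have f: "foldl (wedge m) (T r) (map T [Suc r..<Suc r + Suc j])
      = wedge m (foldl (wedge m) (T r) (map T [Suc r..<Suc r + j])) (T (Suc r + j))"
    unfolding e by (simp only: map_append foldl_append list.map foldl_Cons foldl_Nil)
  have "ker_op m (foldl (wedge m) (T r) (map T [Suc r..<Suc r + Suc j]))
      = msum (KSZ m T {r..<Suc r + j} UNIV) (ker_op m (T (Suc r + j)))"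
    unfolding f ker_wedge Suc.IH ..
  also have "\<dots> = KSZ m T (insert (Suc r + j) {r..<Suc r + j}) UNIV"
    by (rule KSZ_insert) auto
  also have "insert (Suc r + j) {r..<Suc r + j} = {r..<Suc r + Suc j}" by auto
  finally show ?case .
qed

lemma ker_foldl_vee:
  fixes T :: "nat \<Rightarrow> 'x::{finite,linorder} list \<Rightarrow> 'x list \<Rightarrow> 'k::field"
  shows "ker_op m (foldl (vee m) (T r) (map T [Suc r..<Suc r + j])) = (\<Inter>i\<in>{r..<Suc r + j}. ker_op m (T i))"
proof (induction j)
  case 0 then show ?case by simp
next
  case (Suc j)
  have e: "[Suc r..<Suc r + Suc j] = [Suc r..<Suc r + j] @ [Suc r + j]" by simp
  have f: "foldl (vee m) (T r) (map T [Suc r..<Suc r + Suc j])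
      = vee m (foldl (vee m) (T r) (map T [Suc r..<Suc r + j])) (T (Suc r + j))"
    unfolding e by (simp only: map_append foldl_append list.map foldl_Cons foldl_Nil)
  have "ker_op m (foldl (vee m) (T r) (map T [Suc r..<Suc r + Suc j]))
      = (\<Inter>i\<in>{r..<Suc r + j}. ker_op m (T i)) \<inter> ker_op m (T (Suc r + j))"
    unfolding f ker_vee Suc.IH ..
  also have "\<dots> = (\<Inter>i\<in>insert (Suc r + j) {r..<Suc r + j}. ker_op m (T i))" by auto
  also have "insert (Suc r + j) {r..<Suc r + j} = {r..<Suc r + Suc j}" by auto
  finally show ?case .
qed

context
  fixes N :: nat and R :: "('x::{finite,linorder} list \<Rightarrow> 'k::field) set" and m :: nat
  assumes red: "reduced_hom_pres N R" and ec: "extra_confluent N R"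
begin

abbreviation "TT \<equiv> Sm N R m"
abbreviation "JJ i \<equiv> ker_op m (Sm N R m i)"

lemma TT_red: "i + N \<le> m \<Longrightarrow> red_op m (TT i)"
proof -
  assume h: "i + N \<le> m"
  have e: "i + N + (m - N - i) = m" using h by simp
  from embed_red[OF S_red[OF red], of i "m - N - i"] show ?thesis unfolding e Sm_def .
qed

lemma F1:
  assumes d: "2 \<le> d" "d \<le> N - 1" and im: "i + d + N \<le> m"
  shows "JJ i \<inter> JJ (i + d) \<subseteq> JJ (i + d - 1)"
proof
  fix v assume v: "v \<in> JJ i \<inter> JJ (i + d)"
  define c where "c = m - N - d - i"
  have mm: "i + (N + d) + c = m" using im by (simp add: c_def)
  have e0: "TT i = embed i (N + d) c (embed 0 N d (S_op N R))"
    unfolding Sm_def by (rule embed_embed'[symmetric]) (use im in \<open>auto simp: c_def\<close>)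
  have ed: "TT (i + d) = embed i (N + d) c (embed d N 0 (S_op N R))"
    unfolding Sm_def by (rule embed_embed'[symmetric]) (use im in \<open>auto simp: c_def\<close>)
  have ed1: "TT (i + d - 1) = embed i (N + d) c (embed (d - 1) N 1 (S_op N R))"
    unfolding Sm_def by (rule embed_embed'[symmetric]) (use im d in \<open>auto simp: c_def\<close>)
  have vV: "v \<in> Vm (i + (N + d) + c)" using v mm by (simp add: ker_op_def)
  have s0: "opsupp (N + d) (embed 0 N d (S_op N R))" by (rule opsupp_embed) simp
  have sd: "opsupp (N + d) (embed d N 0 (S_op N R))" by (rule opsupp_embed) simp
  have sd1: "opsupp (N + d) (embed (d - 1) N 1 (S_op N R))" by (rule opsupp_embed) (use d in simp)
  have v0: "v \<in> ker_op (i + (N + d) + c) (embed i (N + d) c (embed 0 N d (S_op N R)))"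
    using v e0 mm by simp
  have vd: "v \<in> ker_op (i + (N + d) + c) (embed i (N + d) c (embed d N 0 (S_op N R)))"
    using v ed mm by simp
  have "\<forall>p s. length p = i \<longrightarrow> length s = c \<longrightarrow> sl (N + d) p s v \<in> ker_op (N + d) (embed (d - 1) N 1 (S_op N R))"
  proof (intro allI impI)
    fix p s :: "'x list" assume lp: "length p = i" and ls: "length s = c"
    have "sl (N + d) p s v \<in> ker_op (N + d) (embed d N 0 (S_op N R)) \<inter> ker_op (N + d) (embed 0 N d (S_op N R))"
      using v0 vd lp ls unfolding ker_embed[OF s0 vV] ker_embed[OF sd vV] by blast
    then show "sl (N + d) p s v \<in> ker_op (N + d) (embed (d - 1) N 1 (S_op N R))"
      using EC_ker[OF red ec d] by blast
  qed
  then have "v \<in> ker_op (i + (N + d) + c) (embed i (N + d) c (embed (d - 1) N 1 (S_op N R)))"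
    unfolding ker_embed[OF sd1 vV] .
  then show "v \<in> JJ (i + d - 1)" using ed1 mm by simp
qed

lemma F2:
  assumes d: "1 \<le> d" "d \<le> N - 1" and im: "i + d + N \<le> m"
  shows "\<forall>j. 0 < j \<and> j < d \<longrightarrow> JJ i \<inter> JJ (i + d) \<subseteq> JJ (i + j)"
  using d im
proof (induction d rule: less_induct)
  case (less d)
  show ?case
  proof (intro allI impI)
    fix j assume j: "0 < j \<and> j < d"
    then have d2: "2 \<le> d" by simp
    have inc: "JJ i \<inter> JJ (i + d) \<subseteq> JJ (i + (d - 1))"
      using F1[OF d2 less.prems(2) less.prems(3)] d2 by (simp add: add_diff_assoc)
    show "JJ i \<inter> JJ (i + d) \<subseteq> JJ (i + j)"
    proof (cases "j = d - 1")
      case True then show ?thesis using inc by simp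
    next
      case False
      then have j': "0 < j \<and> j < d - 1" using j by linarith
      have "\<forall>j. 0 < j \<and> j < d - 1 \<longrightarrow> JJ i \<inter> JJ (i + (d - 1)) \<subseteq> JJ (i + j)"
        by (rule less.IH) (use less.prems d2 in auto)
      then have "JJ i \<inter> JJ (i + (d - 1)) \<subseteq> JJ (i + j)" using j' by blast
      then show ?thesis using inc by blast
    qed
  qed
qed

lemma TT_braid:
  assumes sc: "side_confluent N R" and ij: "i \<le> j" "j - i \<le> N - 1" and jm: "j + N \<le> m"
  shows "\<exists>k\<ge>1. braid m (TT i) (TT j) k = braid m (TT j) (TT i) k"
proof (cases "i = j")
  case True then show ?thesis by (intro exI[of _ 1]) simp
next
  case False
  then have "1 \<le> j - i" using ij by simp
  from SC_lift[OF sc this ij(2), of i m] ij jm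
  obtain k where "k \<ge> 1" "braid m (TT j) (TT i) k = braid m (TT i) (TT j) k" by auto
  then show ?thesis by metis
qed

lemma diamond_I:
  assumes sc: "side_confluent N R" and finA: "finite A"
    and Am: "\<And>i. i \<in> A \<Longrightarrow> i + N \<le> m"
    and Ad: "\<And>i j. i \<in> A \<Longrightarrow> j \<in> A \<Longrightarrow> i \<le> j \<Longrightarrow> j - i \<le> N - 1"
  shows "diamond m TT A"
proof
  show "finite A" by (rule finA)
next
  fix i assume "i \<in> A" then show "red_op m (TT i)" using TT_red Am by blast
next
  fix i j assume i: "i \<in> A" and j: "j \<in> A"
  show "\<exists>k\<ge>1. braid m (TT i) (TT j) k = braid m (TT j) (TT i) k"
  proof (cases "i \<le> j")
    case True then show ?thesis using TT_braid[OF sc True Ad[OF i j True] Am[OF j]] by blast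
  next
    case False
    then have "j \<le> i" by simp
    from TT_braid[OF sc this Ad[OF j i this] Am[OF i]] show ?thesis by metis
  qed
qed

lemma pair_elem:
  assumes sc: "side_confluent N R" and ij: "i \<le> j" "j - i \<le> N - 1" "j + N \<le> m"
    and lw: "length w = m" and ri: "TT i w \<noteq> delta w" and rj: "TT j w \<noteq> delta w"
  shows "\<exists>y. y \<in> JJ i \<and> y \<in> JJ j \<and> Bl m w y \<and> y w = 1"
proof -
  have D: "diamond m TT {i, j}"
    by (rule diamond_I[OF sc]) (use ij in auto)
  have redi: "red_op m (TT i)" and redj: "red_op m (TT j)" using TT_red ij by auto
  define a where "a = (\<lambda>u. delta w u - TT i w u)"
  define b where "b = (\<lambda>u. delta w u - TT j w u)"
  have ak: "a \<in> JJ i" unfolding a_def by (rule red_row_ker[OF redi lw])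
  have bk: "b \<in> JJ j" unfolding b_def by (rule red_row_ker[OF redj lw])
  have Bi: "Bs m w (TT i w)" using diamond.Trow_below[OF D _ lw ri] by simp
  have Bj: "Bs m w (TT j w)" using diamond.Trow_below[OF D _ lw rj] by simp
  have aBl: "Bl m w a" using Bi lw ak unfolding a_def
    by (auto simp: Bl_def Bs_def ker_op_def delta_def split: if_splits)
  have aw: "a w = 1" using Bi by (auto simp: a_def Bs_def)
  show ?thesis
  proof (cases "i = j")
    case True then show ?thesis using ak aBl aw by blast
  next
    case False
    have S: "subsp m (KSZ m TT {i, j} UNIV)" by (rule KSZ_subsp) simp
    have aK: "a \<in> KSZ m TT {i, j} UNIV" by (rule ker_in_KSZ[of _ i]) (use ak in auto)
    have bK: "b \<in> KSZ m TT {i, j} UNIV" by (rule ker_in_KSZ[of _ j]) (use bk in auto)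
    define dd where "dd = (\<lambda>u. a u - b u)"
    have dK: "dd \<in> KSZ m TT {i, j} UNIV" unfolding dd_def by (rule subsp_diff[OF S aK bK])
    have dB: "Bs m w dd"
    proof -
      have "dd \<in> Vm m" unfolding dd_def
        using subsp_diff[OF Vm_subsp, of a m b] ak bk by (simp add: ker_op_def)
      moreover have "\<forall>u. dd u \<noteq> 0 \<longrightarrow> u < w"
      proof (intro allI impI)
        fix u assume "dd u \<noteq> 0"
        then have "TT j w u \<noteq> 0 \<or> TT i w u \<noteq> 0" by (auto simp: dd_def a_def b_def)
        then show "u < w" using Bi Bj by (auto simp: Bs_def)
      qed
      ultimately show ?thesis by (simp add: Bs_def)
    qed
    have "dd \<in> KSZ m TT {i, j} {u. u < w}" by (rule diamond.conf_below[OF D dK dB])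
    then obtain vs where vs: "\<forall>l\<in>{i, j}. vs l \<in> ker_op m (TT l)" "\<forall>l\<in>{i, j}. \<forall>u. vs l u \<noteq> 0 \<longrightarrow> u \<in> {u. u < w}"
      "dd = (\<lambda>u. \<Sum>l\<in>{i, j}. vs l u)" using KSZ_D by blast
    define y where "y = (\<lambda>u. a u - vs i u)"
    have vi: "vs i \<in> JJ i" "vs j \<in> JJ j" using vs(1) by auto
    have y1: "y \<in> JJ i" unfolding y_def by (rule subsp_diff[OF ker_subsp ak vi(1)])
    have y2': "y = (\<lambda>u. b u + vs j u)"
    proof
      fix u
      have "a u - b u = vs i u + vs j u" using fun_cong[OF vs(3), of u] False by (simp add: dd_def)
      then show "y u = b u + vs j u" by (simp add: y_def algebra_simps)
    qed
    have y2: "y \<in> JJ j" unfolding y2' by (rule subsp_add[OF ker_subsp bk vi(2)])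
    have viw: "\<forall>u. vs i u \<noteq> 0 \<longrightarrow> u < w" using vs(2) by auto
    have yw: "y w = 1" using aw viw by (auto simp: y_def)
    have yB: "Bl m w y" unfolding Bl_def
    proof (intro conjI allI impI)
      show "y \<in> Vm m" using y1 by (simp add: ker_op_def)
    next
      fix u assume "y u \<noteq> 0"
      then have "a u \<noteq> 0 \<or> vs i u \<noteq> 0" by (auto simp: y_def)
      then show "u \<le> w" using aBl viw by (auto simp: Bl_def)
    qed
    show ?thesis using y1 y2 yw yB by blast
  qed
qed

lemma part2_incl:
  assumes sc: "side_confluent N R" and N2: "2 \<le> N" and k: "2 \<le> k" "k \<le> N - 1" and rk: "r + k + N \<le> m"
    and x: "x \<in> KSZ m TT {r..<r + k} UNIV" "x \<in> JJ (r + k)"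
  shows "x \<in> JJ (r + k - 1)"
proof -
  let ?A = "{r..<r + k}"
  have D: "diamond m TT ?A" by (rule diamond_I[OF sc]) (use k rk in auto)
  have SK: "subsp m (KSZ m TT ?A UNIV)" by (rule KSZ_subsp) simp
  have SJ: "subsp m (JJ (r + k - 1))" by (rule ker_subsp)
  have redk: "red_op m (TT (r + k))" using TT_red rk by simp
  have redk1: "red_op m (TT (r + k - 1))" using TT_red rk by simp
  have J1K: "JJ (r + k - 1) \<subseteq> KSZ m TT ?A UNIV"
    using ker_in_KSZ[of ?A "r + k - 1" _ m TT] k by auto
  have main: "\<And>w. length w = m \<Longrightarrow> \<forall>x. x \<in> KSZ m TT ?A UNIV \<and> x \<in> JJ (r + k) \<and> Bl m w x \<longrightarrow> x \<in> JJ (r + k - 1)"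
  proof -
    fix w0 :: "'x list" assume lw0: "length w0 = m"
    show "\<forall>x. x \<in> KSZ m TT ?A UNIV \<and> x \<in> JJ (r + k) \<and> Bl m w0 x \<longrightarrow> x \<in> JJ (r + k - 1)"
      using lw0
    proof (induction w0 rule: word_induct[of _ m])
      case (2 w)
      have lw: "length w = m" by (rule 2(1))
      have zero_top: "\<And>x. x \<in> KSZ m TT ?A UNIV \<Longrightarrow> x \<in> JJ (r + k) \<Longrightarrow> Bl m w x \<Longrightarrow> x w = 0 \<Longrightarrow> x \<in> JJ (r + k - 1)"
      proof -
        fix x assume xK: "x \<in> KSZ m TT ?A UNIV" and xJ: "x \<in> JJ (r + k)" and xB: "Bl m w x" and xw: "x w = 0"
        show "x \<in> JJ (r + k - 1)"
        proof (cases "x = (\<lambda>_. 0)")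
          case True then show ?thesis using subsp_zero[OF SJ] by simp
        next
          case False
          have xV: "x \<in> Vm m" using xB by (simp add: Bl_def)
          obtain w' where w': "length w' = m" "x w' \<noteq> 0" "Bl m w' x" using Max_supp[OF xV False] by blast
          have "w' \<le> w" using xB w'(2) by (simp add: Bl_def)
          moreover have "w' \<noteq> w" using xw w'(2) by auto
          ultimately have "w' < w" by simp
          then have "\<forall>x. x \<in> KSZ m TT ?A UNIV \<and> x \<in> JJ (r + k) \<and> Bl m w' x \<longrightarrow> x \<in> JJ (r + k - 1)"
            using 2(2) w'(1) by blast
          then show ?thesis using xK xJ w'(3) by blast
        qed
      qed
      show ?case
      proof (intro allI impI)
        fix x assume "x \<in> KSZ m TT ?A UNIV \<and> x \<in> JJ (r + k) \<and> Bl m w x"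
        then have xK: "x \<in> KSZ m TT ?A UNIV" and xJ: "x \<in> JJ (r + k)" and xB: "Bl m w x" by auto
        show "x \<in> JJ (r + k - 1)"
        proof (cases "x w = 0")
          case True then show ?thesis using zero_top xK xJ xB by blast
        next
          case xw: False
          have rk_w: "TT (r + k) w \<noteq> delta w" by (rule lead_reducible[OF redk lw xJ xB xw])
          obtain i where i: "i \<in> ?A" "TT i w \<noteq> delta w"
            using diamond.conf_lead[OF D xK lw xB xw] by blast
          have rk1_w: "TT (r + k - 1) w \<noteq> delta w"
          proof (cases "i = r + k - 1")
            case True then show ?thesis using i by simp
          next
            case False
            then have ilt: "i < r + k - 1" "r \<le> i" using i(1) by auto
            have pe: "i \<le> r + k" "r + k - i \<le> N - 1" "r + k + N \<le> m" using ilt k rk by auto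
            obtain y where y: "y \<in> JJ i" "y \<in> JJ (r + k)" "Bl m w y" "y w = 1"
              using pair_elem[OF sc pe lw i(2) rk_w] by blast
            define d where "d = r + k - i"
            have d: "2 \<le> d" "d \<le> N - 1" "i + d + N \<le> m" using ilt k rk by (auto simp: d_def)
            have dd: "i + d = r + k" using ilt by (simp add: d_def)
            have "JJ i \<inter> JJ (r + k) \<subseteq> JJ (r + k - 1)" using F1[OF d] unfolding dd .
            then have "y \<in> JJ (r + k - 1)" using y(1,2) by blast
            then show ?thesis using lead_reducible[OF redk1 lw _ y(3)] y(4) by simp
          qed
          have pe2: "r + k - 1 \<le> r + k" "r + k - (r + k - 1) \<le> N - 1" "r + k + N \<le> m" using k rk by auto
          obtain y where y: "y \<in> JJ (r + k - 1)" "y \<in> JJ (r + k)" "Bl m w y" "y w = 1"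
            using pair_elem[OF sc pe2 lw rk1_w rk_w] by blast
          define x' where "x' = (\<lambda>u. x u - x w * y u)"
          have "(\<lambda>u. x w * y u) \<in> KSZ m TT ?A UNIV" using subsp_smult[OF SK] J1K y(1) by blast
          then have x'K: "x' \<in> KSZ m TT ?A UNIV" unfolding x'_def by (rule subsp_diff[OF SK xK])
          have x'J: "x' \<in> JJ (r + k)" unfolding x'_def
            by (rule subsp_diff[OF ker_subsp xJ subsp_smult[OF ker_subsp y(2)]])
          have x'B: "Bl m w x'" unfolding Bl_def
          proof (intro conjI allI impI)
            show "x' \<in> Vm m" unfolding x'_def using xB y(3)
              subsp_diff[OF Vm_subsp, of x m "\<lambda>u. x w * y u"] subsp_smult[OF Vm_subsp, of y m "x w"]
              by (auto simp: Bl_def)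
          next
            fix u assume "x' u \<noteq> 0"
            then have "x u \<noteq> 0 \<or> y u \<noteq> 0" by (auto simp: x'_def)
            then show "u \<le> w" using xB y(3) by (auto simp: Bl_def)
          qed
          have x'w: "x' w = 0" using y(4) by (simp add: x'_def)
          have x'1: "x' \<in> JJ (r + k - 1)" by (rule zero_top[OF x'K x'J x'B x'w])
          have "(\<lambda>u. x' u + x w * y u) \<in> JJ (r + k - 1)"
            by (rule subsp_add[OF SJ x'1 subsp_smult[OF SJ y(1)]])
          moreover have "(\<lambda>u. x' u + x w * y u) = x" by (simp add: x'_def)
          ultimately show ?thesis by simp
        qed
      qed
    qed (rule lw0)
  qed
  show ?thesis
  proof (cases "x = (\<lambda>_. 0)")
    case True then show ?thesis using subsp_zero[OF SJ] by simp
  next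
    case False
    have xV: "x \<in> Vm m" using x(2) by (simp add: ker_op_def)
    obtain w where w: "length w = m" "x w \<noteq> 0" "Bl m w x" using Max_supp[OF xV False] by blast
    show ?thesis using main[OF w(1)] x w(3) by blast
  qed
qed

end


theorem lemma4p3p1:
  fixes R :: "('x::{linorder,finite} list \<Rightarrow> 'k::field) set"
    and N m r k :: nat
  assumes "N \<ge> 2"
    and "reduced_hom_pres N R"
    and "extra_confluent N R"
    and "m \<ge> N + 2"
    and "2 \<le> k" and "k \<le> N - 1"
    and "r + k \<le> m - N"
  shows "vee m (Sm N R m r) (Sm N R m (r + k))
           = vee_list m (map (Sm N R m) [r..<r + k + 1])
         \<and> vee m (wedge_list m (map (Sm N R m) [r..<r + k])) (Sm N R m (r + k))
           = vee m (Sm N R m (r + k - 1)) (Sm N R m (r + k))"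
proof -
  note red = assms(2) and ec = assms(3)
  have sc: "side_confluent N R" using ec by (simp add: extra_confluent_def)
  have rk: "r + k + N \<le> m" using assms(4,7) by simp
  have k1: "Suc r + (k - 1) = r + k" using assms(5) by simp
  have l1: "[r..<r + k + 1] = r # ([Suc r..<r + k] @ [r + k])"
  proof -
    have a: "[r..<r + k + 1] = r # [Suc r..<r + k + 1]" by (rule upt_conv_Cons) simp
    have b0: "r + k + 1 = Suc (r + k)" by simp
    have b: "[Suc r..<r + k + 1] = [Suc r..<r + k] @ [r + k]"
      unfolding b0 by (rule upt_Suc_append) (use assms(5) in simp)
    show ?thesis unfolding a b ..
  qed
  have l2: "[r..<r + k] = r # [Suc r..<r + k]"
    by (rule upt_conv_Cons) (use assms(5) in simp)
  have P1: "ker_op m (Sm N R m r) \<inter> ker_op m (Sm N R m (r + k))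
      = ker_op m (foldl (vee m) (Sm N R m r) (map (Sm N R m) [Suc r..<r + k])) \<inter> ker_op m (Sm N R m (r + k))"
  proof -
    have e: "ker_op m (foldl (vee m) (Sm N R m r) (map (Sm N R m) [Suc r..<r + k]))
        = (\<Inter>i\<in>{r..<r + k}. ker_op m (Sm N R m i))"
      using ker_foldl_vee[of m "Sm N R m" r "k - 1", unfolded k1] .
    have F: "\<forall>j. 0 < j \<and> j < k \<longrightarrow> ker_op m (Sm N R m r) \<inter> ker_op m (Sm N R m (r + k)) \<subseteq> ker_op m (Sm N R m (r + j))"
      by (rule F2[OF red ec]) (use assms rk in auto)
    have "ker_op m (Sm N R m r) \<inter> ker_op m (Sm N R m (r + k)) \<subseteq> (\<Inter>i\<in>{r..<r + k}. ker_op m (Sm N R m i))"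
    proof
      fix v assume v: "v \<in> ker_op m (Sm N R m r) \<inter> ker_op m (Sm N R m (r + k))"
      show "v \<in> (\<Inter>i\<in>{r..<r + k}. ker_op m (Sm N R m i))"
      proof
        fix i assume i: "i \<in> {r..<r + k}"
        show "v \<in> ker_op m (Sm N R m i)"
        proof (cases "i = r")
          case True then show ?thesis using v by simp
        next
          case False
          then have "0 < i - r \<and> i - r < k" using i by auto
          then have "v \<in> ker_op m (Sm N R m (r + (i - r)))" using F v by blast
          moreover have "r + (i - r) = i" using i by simp
          ultimately show ?thesis by simp
        qed
      qed
    qed
    moreover have "(\<Inter>i\<in>{r..<r + k}. ker_op m (Sm N R m i)) \<subseteq> ker_op m (Sm N R m r)"
      using assms(5) by auto
    ultimately show ?thesis unfolding e by blast
  qed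
  have part1: "vee m (Sm N R m r) (Sm N R m (r + k)) = vee_list m (map (Sm N R m) [r..<r + k + 1])"
  proof -
    have h: "vee_list m (map (Sm N R m) [r..<r + k + 1])
        = vee m (foldl (vee m) (Sm N R m r) (map (Sm N R m) [Suc r..<r + k])) (Sm N R m (r + k))"
      unfolding l1 by (simp only: list.map map_append vee_list.simps foldl_append foldl_Cons foldl_Nil)
    show ?thesis unfolding h vee_def P1 ..
  qed
  have P2: "ker_op m (foldl (wedge m) (Sm N R m r) (map (Sm N R m) [Suc r..<r + k])) \<inter> ker_op m (Sm N R m (r + k))
      = ker_op m (Sm N R m (r + k - 1)) \<inter> ker_op m (Sm N R m (r + k))"
  proof -
    have e: "ker_op m (foldl (wedge m) (Sm N R m r) (map (Sm N R m) [Suc r..<r + k]))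
        = KSZ m (Sm N R m) {r..<r + k} UNIV"
      using ker_foldl_wedge[of m "Sm N R m" r "k - 1", unfolded k1] .
    have "KSZ m (Sm N R m) {r..<r + k} UNIV \<inter> ker_op m (Sm N R m (r + k)) \<subseteq> ker_op m (Sm N R m (r + k - 1))"
      using part2_incl[OF red ec sc assms(1) assms(5) assms(6) rk] by blast
    moreover have "ker_op m (Sm N R m (r + k - 1)) \<subseteq> KSZ m (Sm N R m) {r..<r + k} UNIV"
    proof
      fix v assume v: "v \<in> ker_op m (Sm N R m (r + k - 1))"
      have "r + k - 1 \<in> {r..<r + k}" using assms(5) by simp
      from ker_in_KSZ[of "{r..<r + k}" "r + k - 1" v m "Sm N R m" UNIV, OF _ this v]
      show "v \<in> KSZ m (Sm N R m) {r..<r + k} UNIV" by simp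
    qed
    ultimately show ?thesis unfolding e by blast
  qed
  have part2: "vee m (wedge_list m (map (Sm N R m) [r..<r + k])) (Sm N R m (r + k))
           = vee m (Sm N R m (r + k - 1)) (Sm N R m (r + k))"
  proof -
    have h: "wedge_list m (map (Sm N R m) [r..<r + k])
        = foldl (wedge m) (Sm N R m r) (map (Sm N R m) [Suc r..<r + k])"
      unfolding l2 by (simp only: list.map wedge_list.simps)
    show ?thesis unfolding h vee_def P2 ..
  qed
  show ?thesis using part1 part2 by simp
qed


end
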